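(* Under the setting and assumptions in the context, $$\frac1n\mathbf A^\top\mathbf A-\frac1n\mathbf B^\top\mathbf B=\sigma^2\,\frac1n\mathbf G^\top\mathbf G+O_p\!\left(\tfrac1{\sqrt n}\right),\qquad \frac1n\mathbf A^\top\mathbf b-\frac1n\mathbf B^\top\mathbf b=\sigma^2\,\frac1n\mathbf G^\top\mathbf 1_{2n\times1}+O_p\!\left(\tfrac1{\sqrt n}\right),$$ and consequently $\hat{\boldsymbol\theta}_n^{\rm BE}=\hat{\boldsymbol\theta}_n^{\rm UB}+O_p(1/\sqrt n)$, so that $\hat{\boldsymbol\theta}_n^{\rm BE}-\boldsymbol\theta^o=O_p(1/\sqrt n)$.
   Context: Camera model. Known intrinsics $f_x,f_y>0$; true rotation $\mathbf R\in SO(3)$ with rows $\mathbf r_1^\top,\mathbf r_2^\top,\mathbf r_3^\top$ and translation $\mathbf t=[t_1,t_2,t_3]^\top$. Let $\mathbf W=\mathrm{diag}(f_x,f_y)$, $\mathbf e_i$ the $i$-th standard unit vector of $\mathbb R^3$, $\mathbf E=[\mathbf e_1~\mathbf e_2]^\top$. For known 3D points $\mathbf p_i^w$ ($i=1,\dots,n$) with $\mathbf e_3^\top(\mathbf R\mathbf p_i^w+\mathbf t)>0$, observations are $\mathbf q_i'=[u_i~v_i]^\top=\mathbf q_i^o+\boldsymbol\epsilon_i$, with $\mathbf q_i^o=[u_i^o~v_i^o]^\top=\frac{\mathbf W\mathbf E(\mathbf R\mathbf p_i^w+\mathbf t)}{\mathbf e_3^\top(\mathbf R\mathbf p_i^w+\mathbf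 t)}$ and $\boldsymbol\epsilon_i=[\epsilon_{i1},\epsilon_{i2}]^\top$. Assumption 1: $\boldsymbol\epsilon_i\sim\mathcal N(0,\sigma^2\mathbf I_2)$ i.i.d., $\sigma^2<\infty$ unknown. Assumption 2: the points do not concentrate on a critical set for camera resectioning (Hartley–Zisserman Result 22.5); moreover the points are bounded, their empirical distribution converges, and $\frac1n\mathbf B^\top\mathbf B$ converges to a nonsingular constant matrix. Let $\bar{\mathbf p}^w=\frac1n\sum_i\mathbf p_i^w$, $\alpha$ defined by $\alpha\sum_{i=1}^n\mathbf e_3^\top(\mathbf R\mathbf p_i^w+\mathbf t)=n$, and $\boldsymbol\theta^o=\alpha[\mathbf r_3^\top~\mathbf r_1^\top~t_1~\mathbf r_2^\top~t_2]^\top$. $\mathbf b=[\mathbf q_1'^\top\cdots\mathbf q_n'^\top]^\top$. $\mathbf A\in\mathbb R^{2n\times11}$ has, for each $i$, rows $[-u_i(\mathbf p_i^w-\bar{\mathbf p}^w)^\top,~f_x(\mathbf p_i^w)^\top,~f_x,~\mathbf 0_{1\times4}]$ and $[-v_i(\mathbf p_i^w-\bar{\mathbf p}^w)^\top,~\mathbf 0_{1\times4},~f_y(\mathbf p_i^w)^\top,~f_y]$; $\mathbf B$ is the same with $u_i,v_i$ replaced by $u_i^o,v_i^o$. $\mathbf G\in\mathbb R^{2n\times11}$ has, for each $i$, two identical rows $[-(\mathbf p_i^w-\bar{\mathbf p}^w)^\top,~\mathbf 0_{1\times8}]$; $\mathbf 1_{2n\times1}$ is the all-ones vector. $\hat{\boldsymbol\theta}_n^{\rm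 UB}=(\mathbf B^\top\mathbf B)^{-1}\mathbf B^\top\mathbf b$ and $\hat{\boldsymbol\theta}_n^{\rm BE}=(\mathbf A^\top\mathbf A-\hat\sigma^2\mathbf G^\top\mathbf G)^{-1}(\mathbf A^\top\mathbf b-\hat\sigma^2\mathbf G^\top\mathbf 1_{2n\times1})$, where $\hat\sigma^2$ is any estimate of $\sigma^2$ with $\sqrt n(\hat\sigma^2-\sigma^2)=O_p(1)$ (e.g. the smallest root of $\lambda\mapsto\det(\boldsymbol\Phi-\lambda\boldsymbol\Delta)$ with $\boldsymbol\Phi=\frac1n\begin{bmatrix}\mathbf A^\top\mathbf A&\mathbf A^\top\mathbf b\\ \mathbf b^\top\mathbf A&\mathbf b^\top\mathbf b\end{bmatrix}$, $\boldsymbol\Delta=\frac1n\begin{bmatrix}\mathbf G^\top\mathbf G&\mathbf G^\top\mathbf 1\\ \mathbf 1^\top\mathbf G&2n\end{bmatrix}$). *)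

theory Defs
  imports "HOL-Probability.Probability"
begin

definition Op :: "'w measure \<Rightarrow> (nat \<Rightarrow> 'w \<Rightarrow> real) \<Rightarrow> (nat \<Rightarrow> real) \<Rightarrow> bool" where
  "Op M X a \<longleftrightarrow> (\<forall>e>0. \<exists>K N. \<forall>n\<ge>N. \<exists>S\<in>sets M.
      {w \<in> space M. X n w > K * a n} \<subseteq> S \<and> measure M S < e)"

text \<open>Components of real^11 are indexed 0..10 via the representation of the numeral type.\<close>
definition idx11 :: "11 \<Rightarrow> nat" where
  "idx11 i = nat (Rep_bit1 i)"

definition vec11 :: "real list \<Rightarrow> real^11" where
  "vec11 xs = (\<chi> i. xs ! idx11 i)"

definition v3list :: "real^3 \<Rightarrow> real list" where
  "v3list x = [x$1, x$2, x$3]"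

definition outer11 :: "real^11 \<Rightarrow> real^11^11" where
  "outer11 a = (\<chi> i j. a$i * a$j)"

definition depth :: "real^3^3 \<Rightarrow> real^3 \<Rightarrow> real^3 \<Rightarrow> real" where
  "depth R t p = (R *v p + t) $ 3"

definition uo :: "real \<Rightarrow> real^3^3 \<Rightarrow> real^3 \<Rightarrow> real^3 \<Rightarrow> real" where
  "uo fx R t p = fx * (R *v p + t) $ 1 / depth R t p"

definition vo :: "real \<Rightarrow> real^3^3 \<Rightarrow> real^3 \<Rightarrow> real^3 \<Rightarrow> real" where
  "vo fy R t p = fy * (R *v p + t) $ 2 / depth R t p"

definition pbar :: "(nat \<Rightarrow> real^3) \<Rightarrow> nat \<Rightarrow> real^3" where
  "pbar p n = (1 / real n) *\<^sub>R (\<Sum>i<n. p i)"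

text \<open>The two rows of A (or of B) belonging to point p, with image coordinates u, v.\<close>
definition rowU :: "real \<Rightarrow> real^3 \<Rightarrow> real^3 \<Rightarrow> real \<Rightarrow> real^11" where
  "rowU fx pb p u = vec11 (v3list (- u *\<^sub>R (p - pb)) @ v3list (fx *\<^sub>R p) @ [fx] @ [0,0,0,0])"

definition rowV :: "real \<Rightarrow> real^3 \<Rightarrow> real^3 \<Rightarrow> real \<Rightarrow> real^11" where
  "rowV fy pb p v = vec11 (v3list (- v *\<^sub>R (p - pb)) @ [0,0,0,0] @ v3list (fy *\<^sub>R p) @ [fy])"

text \<open>Each of the two (identical) rows of G belonging to point p.\<close>
definition rowG :: "real^3 \<Rightarrow> real^3 \<Rightarrow> real^11" where
  "rowG pb p = vec11 (v3list (- (p - pb)) @ [0,0,0,0,0,0,0,0])"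

text \<open>Gram matrices / cross products for sample size n, written as sums over the rows:
  M^T M = sum_k m_k m_k^T, M^T y = sum_k y_k m_k.  U, V are the image coordinates used in
  the matrix (observed ones for A, noise-free ones for B); bu, bv the entries of b.\<close>
definition gram :: "real \<Rightarrow> real \<Rightarrow> (nat \<Rightarrow> real^3) \<Rightarrow> (nat \<Rightarrow> real) \<Rightarrow> (nat \<Rightarrow> real) \<Rightarrow> nat \<Rightarrow> real^11^11" where
  "gram fx fy p U V n = (\<Sum>i<n. outer11 (rowU fx (pbar p n) (p i) (U i))
                              + outer11 (rowV fy (pbar p n) (p i) (V i)))"

definition cross :: "real \<Rightarrow> real \<Rightarrow> (nat \<Rightarrow> real^3) \<Rightarrow> (nat \<Rightarrow> real) \<Rightarrow> (nat \<Rightarrow> real)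
    \<Rightarrow> (nat \<Rightarrow> real) \<Rightarrow> (nat \<Rightarrow> real) \<Rightarrow> nat \<Rightarrow> real^11" where
  "cross fx fy p U V bu bv n = (\<Sum>i<n. bu i *\<^sub>R rowU fx (pbar p n) (p i) (U i)
                                     + bv i *\<^sub>R rowV fy (pbar p n) (p i) (V i))"

definition GtG :: "(nat \<Rightarrow> real^3) \<Rightarrow> nat \<Rightarrow> real^11^11" where
  "GtG p n = (\<Sum>i<n. 2 *\<^sub>R outer11 (rowG (pbar p n) (p i)))"

definition Gt1 :: "(nat \<Rightarrow> real^3) \<Rightarrow> nat \<Rightarrow> real^11" where
  "Gt1 p n = (\<Sum>i<n. 2 *\<^sub>R rowG (pbar p n) (p i))"

definition alpha :: "real^3^3 \<Rightarrow> real^3 \<Rightarrow> (nat \<Rightarrow> real^3) \<Rightarrow> nat \<Rightarrow> real" where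
  "alpha R t p n = real n / (\<Sum>i<n. depth R t (p i))"

definition theta_o :: "real^3^3 \<Rightarrow> real^3 \<Rightarrow> (nat \<Rightarrow> real^3) \<Rightarrow> nat \<Rightarrow> real^11" where
  "theta_o R t p n = alpha R t p n *\<^sub>R
     vec11 (v3list (R$3) @ v3list (R$1) @ [t$1] @ v3list (R$2) @ [t$2])"


text \<open>Observed image coordinates u_i = u_i^o + eps_i1, v_i = v_i^o + eps_i2
  (noise components indexed 0 and 1).\<close>
definition uobs :: "real \<Rightarrow> real^3^3 \<Rightarrow> real^3 \<Rightarrow> (nat \<Rightarrow> real^3) \<Rightarrow> (nat \<Rightarrow> nat \<Rightarrow> 'w \<Rightarrow> real) \<Rightarrow> 'w \<Rightarrow> nat \<Rightarrow> real" where
  "uobs fx R t p eps w i = uo fx R t (p i) + eps i 0 w"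

definition vobs :: "real \<Rightarrow> real^3^3 \<Rightarrow> real^3 \<Rightarrow> (nat \<Rightarrow> real^3) \<Rightarrow> (nat \<Rightarrow> nat \<Rightarrow> 'w \<Rightarrow> real) \<Rightarrow> 'w \<Rightarrow> nat \<Rightarrow> real" where
  "vobs fy R t p eps w i = vo fy R t (p i) + eps i 1 w"

definition AtA where
  "AtA fx fy R t p eps n w = gram fx fy p (uobs fx R t p eps w) (vobs fy R t p eps w) n"

definition Atb where
  "Atb fx fy R t p eps n w = cross fx fy p (uobs fx R t p eps w) (vobs fy R t p eps w)
                                          (uobs fx R t p eps w) (vobs fy R t p eps w) n"

definition BtB where
  "BtB fx fy R t p n = gram fx fy p (\<lambda>i. uo fx R t (p i)) (\<lambda>i. vo fy R t (p i)) n"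

definition Btb where
  "Btb fx fy R t p eps n w = cross fx fy p (\<lambda>i. uo fx R t (p i)) (\<lambda>i. vo fy R t (p i))
                                          (uobs fx R t p eps w) (vobs fy R t p eps w) n"

text \<open>theta^UB_n = (B^T B)^{-1} B^T b and
  theta^BE_n = (A^T A - s2 G^T G)^{-1} (A^T b - s2 G^T 1); matrix_inv is the library inverse
  (an arbitrary/zero-like value when the matrix is singular).\<close>
definition thetaUB where
  "thetaUB fx fy R t p eps n w = matrix_inv (BtB fx fy R t p n) *v Btb fx fy R t p eps n w"

definition thetaBE where
  "thetaBE fx fy R t p eps s2 n w =
     matrix_inv (AtA fx fy R t p eps n w - s2 n w *\<^sub>R GtG p n)
       *v (Atb fx fy R t p eps n w - s2 n w *\<^sub>R Gt1 p n)"

end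

theory Submission
  imports Defs
begin


lemma Op_mono:
  assumes "Op M Y a" "\<And>n w. w \<in> space M \<Longrightarrow> X n w \<le> Y n w"
  shows "Op M X a"
  unfolding Op_def
proof (intro allI impI)
  fix e :: real assume "e > 0"
  then obtain K N where KN: "\<forall>n\<ge>N. \<exists>S\<in>sets M. {w \<in> space M. Y n w > K * a n} \<subseteq> S \<and> measure M S < e"
    using assms(1) unfolding Op_def by blast
  show "\<exists>K N. \<forall>n\<ge>N. \<exists>S\<in>sets M. {w \<in> space M. X n w > K * a n} \<subseteq> S \<and> measure M S < e"
  proof (intro exI allI impI)
    fix n assume "n \<ge> N"
    then obtain S where "S \<in> sets M" "{w \<in> space M. Y n w > K * a n} \<subseteq> S" "measure M S < e"
      using KN by blast
    moreover have "{w \<in> space M. X n w > K * a n} \<subseteq> {w \<in> space M. Y n w > K * a n}"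
      using assms(2) by (auto intro: less_le_trans)
    ultimately show "\<exists>S\<in>sets M. {w \<in> space M. X n w > K * a n} \<subseteq> S \<and> measure M S < e"
      by blast
  qed
qed

lemma Op_posK:
  assumes "Op M X a" "e > 0" "\<And>n. a n \<ge> 0"
  shows "\<exists>K N. K \<ge> 0 \<and> (\<forall>n\<ge>N. \<exists>S\<in>sets M. {w \<in> space M. X n w > K * a n} \<subseteq> S \<and> measure M S < e)"
proof -
  obtain K N where KN: "\<forall>n\<ge>N. \<exists>S\<in>sets M. {w \<in> space M. X n w > K * a n} \<subseteq> S \<and> measure M S < e"
    using assms unfolding Op_def by blast
  have "\<forall>n\<ge>N. \<exists>S\<in>sets M. {w \<in> space M. X n w > max K 0 * a n} \<subseteq> S \<and> measure M S < e"
  proof (intro allI impI)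
    fix n assume "n \<ge> N"
    then obtain S where S: "S \<in> sets M" "{w \<in> space M. X n w > K * a n} \<subseteq> S" "measure M S < e"
      using KN by blast
    have "K * a n \<le> max K 0 * a n" using assms(3)[of n] by (simp add: mult_right_mono)
    then have "{w \<in> space M. X n w > max K 0 * a n} \<subseteq> S" using S(2) by force
    then show "\<exists>S\<in>sets M. {w \<in> space M. X n w > max K 0 * a n} \<subseteq> S \<and> measure M S < e"
      using S by blast
  qed
  then show ?thesis by (intro exI[of _ "max K 0"]) auto
qed

lemma Op_add:
  assumes "Op M X a" "Op M Y a"
  shows "Op M (\<lambda>n w. X n w + Y n w) a"
  unfolding Op_def
proof (intro allI impI)
  fix e :: real assume e: "e > 0"
  obtain K1 N1 where K1: "\<forall>n\<ge>N1. \<exists>S\<in>sets M. {w \<in> space M. X n w > K1 * a n} \<subseteq> S \<and> measure M S < e/2"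
    using assms(1) e unfolding Op_def by (meson half_gt_zero)
  obtain K2 N2 where K2: "\<forall>n\<ge>N2. \<exists>S\<in>sets M. {w \<in> space M. Y n w > K2 * a n} \<subseteq> S \<and> measure M S < e/2"
    using assms(2) e unfolding Op_def by (meson half_gt_zero)
  show "\<exists>K N. \<forall>n\<ge>N. \<exists>S\<in>sets M. {w \<in> space M. X n w + Y n w > K * a n} \<subseteq> S \<and> measure M S < e"
  proof (intro exI allI impI)
    fix n assume "n \<ge> max N1 N2"
    then obtain S1 S2 where S: "S1 \<in> sets M" "{w \<in> space M. X n w > K1 * a n} \<subseteq> S1" "measure M S1 < e/2"
        "S2 \<in> sets M" "{w \<in> space M. Y n w > K2 * a n} \<subseteq> S2" "measure M S2 < e/2"
      using K1 K2 by (meson max.boundedE)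
    have "{w \<in> space M. X n w + Y n w > (K1 + K2) * a n} \<subseteq> S1 \<union> S2"
      using S(2,5) by (force simp: distrib_right)
    moreover have "measure M (S1 \<union> S2) < e"
      using measure_Un_le[OF S(1) S(4)] S(3,6) by linarith
    ultimately show "\<exists>S\<in>sets M. {w \<in> space M. X n w + Y n w > (K1 + K2) * a n} \<subseteq> S \<and> measure M S < e"
      using S(1,4) by blast
  qed
qed

lemma Op_zero: "Op M (\<lambda>n w. 0) a"
  unfolding Op_def by (intro allI impI exI[of _ 0]) (auto intro!: bexI[of _ "{}"])

lemma Op_sum:
  assumes "finite I" "\<And>i. i \<in> I \<Longrightarrow> Op M (X i) a"
  shows "Op M (\<lambda>n w. \<Sum>i\<in>I. X i n w) a"
  using assms
proof (induction I rule: finite_induct)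
  case empty then show ?case by (simp add: Op_zero)
next
  case (insert x F)
  then show ?case by (simp add: Op_add)
qed

lemma Op_const:
  assumes "\<And>n. c n \<le> C * a n"
  shows "Op M (\<lambda>n w. c n) a"
proof (unfold Op_def, intro allI impI exI[of _ C] exI[of _ 0])
  fix e :: real and n :: nat assume "e > 0"
  have "{w \<in> space M. c n > C * a n} = {}" using assms[of n] by auto
  then show "\<exists>S\<in>sets M. {w \<in> space M. c n > C * a n} \<subseteq> S \<and> measure M S < e"
    using \<open>e > 0\<close> by (intro bexI[of _ "{}"]) auto
qed

lemma Op_mult:
  assumes "Op M X (\<lambda>_. 1)" "Op M Y a" "\<And>n. a n \<ge> 0"
    and "\<And>n w. w \<in> space M \<Longrightarrow> X n w \<ge> 0" "\<And>n w. w \<in> space M \<Longrightarrow> Y n w \<ge> 0"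
  shows "Op M (\<lambda>n w. X n w * Y n w) a"
  unfolding Op_def
proof (intro allI impI)
  fix e :: real assume e: "e > 0"
  obtain K1 N1 where K1: "K1 \<ge> 0" "\<forall>n\<ge>N1. \<exists>S\<in>sets M. {w \<in> space M. X n w > K1 * 1} \<subseteq> S \<and> measure M S < e/2"
    using Op_posK[OF assms(1), of "e/2"] e by auto
  obtain K2 N2 where K2: "K2 \<ge> 0" "\<forall>n\<ge>N2. \<exists>S\<in>sets M. {w \<in> space M. Y n w > K2 * a n} \<subseteq> S \<and> measure M S < e/2"
    using Op_posK[OF assms(2), of "e/2"] e assms(3) by auto
  show "\<exists>K N. \<forall>n\<ge>N. \<exists>S\<in>sets M. {w \<in> space M. X n w * Y n w > K * a n} \<subseteq> S \<and> measure M S < e"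
  proof (intro exI allI impI)
    fix n assume "n \<ge> max N1 N2"
    then obtain S1 S2 where S: "S1 \<in> sets M" "{w \<in> space M. X n w > K1 * 1} \<subseteq> S1" "measure M S1 < e/2"
        "S2 \<in> sets M" "{w \<in> space M. Y n w > K2 * a n} \<subseteq> S2" "measure M S2 < e/2"
      using K1 K2 by (meson max.boundedE)
    have "{w \<in> space M. X n w * Y n w > (K1 * K2) * a n} \<subseteq> S1 \<union> S2"
    proof
      fix w assume w: "w \<in> {w \<in> space M. X n w * Y n w > (K1 * K2) * a n}"
      show "w \<in> S1 \<union> S2"
      proof (rule ccontr)
        assume "w \<notin> S1 \<union> S2"
        then have "X n w \<le> K1" "Y n w \<le> K2 * a n" using S(2,5) w by auto
        then have "X n w * Y n w \<le> K1 * (K2 * a n)"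
          using assms(4,5)[of w n] w K1(1) by (intro mult_mono) auto
        then show False using w by (simp add: mult.assoc)
      qed
    qed
    moreover have "measure M (S1 \<union> S2) < e"
      using measure_Un_le[OF S(1) S(4)] S(3,6) by linarith
    ultimately show "\<exists>S\<in>sets M. {w \<in> space M. X n w * Y n w > (K1 * K2) * a n} \<subseteq> S \<and> measure M S < e"
      using S(1,4) by blast
  qed
qed

lemma Op_cmult:
  assumes "Op M Y a" "\<And>n. a n \<ge> 0" "c \<ge> 0" "\<And>n w. w \<in> space M \<Longrightarrow> Y n w \<ge> 0"
  shows "Op M (\<lambda>n w. c * Y n w) a"
  using Op_mult[of M "\<lambda>n w. c" Y a] assms Op_const[of "\<lambda>n. c" c "\<lambda>_. 1" M] by auto

lemma Op_small:
  assumes "Op M X (\<lambda>n. 1 / sqrt (real n))" "\<delta> > 0" "e > 0"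
  shows "\<exists>N. \<forall>n\<ge>N. \<exists>S\<in>sets M. {w \<in> space M. X n w > \<delta>} \<subseteq> S \<and> measure M S < e"
proof -
  obtain K N where K: "K \<ge> 0" "\<forall>n\<ge>N. \<exists>S\<in>sets M. {w \<in> space M. X n w > K * (1 / sqrt (real n))} \<subseteq> S \<and> measure M S < e"
    using Op_posK[OF assms(1) assms(3)] by auto
  obtain N2 :: nat where N2: "real N2 > (K / \<delta>)\<^sup>2" using reals_Archimedean2 by blast
  show ?thesis
  proof (intro exI allI impI)
    fix n assume n: "n \<ge> max N (N2 + 1)"
    then have "real n > (K / \<delta>)\<^sup>2" using N2 by linarith
    then have "sqrt (real n) > K / \<delta>"
      using K(1) assms(2) real_less_rsqrt by blast
    then have "K < \<delta> * sqrt (real n)" using assms(2) by (simp add: divide_less_eq mult.commute)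
    moreover have "sqrt (real n) > 0" using n by simp
    ultimately have "K * (1 / sqrt (real n)) < \<delta>" by (simp add: divide_less_eq)
    then have "{w \<in> space M. X n w > \<delta>} \<subseteq> {w \<in> space M. X n w > K * (1 / sqrt (real n))}" by auto
    then show "\<exists>S\<in>sets M. {w \<in> space M. X n w > \<delta>} \<subseteq> S \<and> measure M S < e"
      using K(2) n by (meson max.boundedE order.trans)
  qed
qed

lemma Op_ev:
  assumes "Op M Y a"
    and "\<And>e. e > 0 \<Longrightarrow> \<exists>N. \<forall>n\<ge>N. \<exists>S\<in>sets M. {w \<in> space M. X n w > Y n w} \<subseteq> S \<and> measure M S < e"
  shows "Op M X a"
  unfolding Op_def
proof (intro allI impI)
  fix e :: real assume e: "e > 0"
  obtain K1 N1 where K1: "\<forall>n\<ge>N1. \<exists>S\<in>sets M. {w \<in> space M. Y n w > K1 * a n} \<subseteq> S \<and> measure M S < e/2"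
    using assms(1) e unfolding Op_def by (meson half_gt_zero)
  obtain N2 where K2: "\<forall>n\<ge>N2. \<exists>S\<in>sets M. {w \<in> space M. X n w > Y n w} \<subseteq> S \<and> measure M S < e/2"
    using assms(2)[of "e/2"] e by auto
  show "\<exists>K N. \<forall>n\<ge>N. \<exists>S\<in>sets M. {w \<in> space M. X n w > K * a n} \<subseteq> S \<and> measure M S < e"
  proof (intro exI allI impI)
    fix n assume "n \<ge> max N1 N2"
    then obtain S1 S2 where S: "S1 \<in> sets M" "{w \<in> space M. Y n w > K1 * a n} \<subseteq> S1" "measure M S1 < e/2"
        "S2 \<in> sets M" "{w \<in> space M. X n w > Y n w} \<subseteq> S2" "measure M S2 < e/2"
      using K1 K2 by (meson max.boundedE)
    have "{w \<in> space M. X n w > K1 * a n} \<subseteq> S1 \<union> S2"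
      using S(2,5) by force
    moreover have "measure M (S1 \<union> S2) < e"
      using measure_Un_le[OF S(1) S(4)] S(3,6) by linarith
    ultimately show "\<exists>S\<in>sets M. {w \<in> space M. X n w > K1 * a n} \<subseteq> S \<and> measure M S < e"
      using S(1,4) by blast
  qed
qed

lemma Op_sqrt_to_1:
  assumes "Op M X (\<lambda>n. 1 / sqrt (real n))"
  shows "Op M X (\<lambda>_. 1)"
  unfolding Op_def
proof (intro allI impI)
  fix e :: real assume e: "e > 0"
  obtain K N where K: "K \<ge> 0" "\<forall>n\<ge>N. \<exists>S\<in>sets M. {w \<in> space M. X n w > K * (1 / sqrt (real n))} \<subseteq> S \<and> measure M S < e"
    using Op_posK[OF assms e] by auto
  show "\<exists>K N. \<forall>n\<ge>N. \<exists>S\<in>sets M. {w \<in> space M. X n w > K * 1} \<subseteq> S \<and> measure M S < e"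
  proof (intro exI allI impI)
    fix n assume n: "n \<ge> max N 1"
    then have "sqrt (real n) \<ge> 1" by simp
    then have "K * (1 / sqrt (real n)) \<le> K * 1" using K(1)
      by (intro mult_left_mono) (auto simp: divide_le_eq)
    then have "{w \<in> space M. X n w > K * 1} \<subseteq> {w \<in> space M. X n w > K * (1 / sqrt (real n))}" by auto
    then show "\<exists>S\<in>sets M. {w \<in> space M. X n w > K * 1} \<subseteq> S \<and> measure M S < e"
      using K(2) n by (meson max.boundedE order.trans)
  qed
qed

lemma Op_rate_conv:
  assumes "Op M (\<lambda>n w. sqrt (real n) * Z n w) (\<lambda>_. 1)"
  shows "Op M Z (\<lambda>n. 1 / sqrt (real n))"
  unfolding Op_def
proof (intro allI impI)
  fix e :: real assume e: "e > 0"
  obtain K N where K: "\<forall>n\<ge>N. \<exists>S\<in>sets M. {w \<in> space M. sqrt (real n) * Z n w > K * 1} \<subseteq> S \<and> measure M S < e"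
    using assms e unfolding Op_def by blast
  show "\<exists>K N. \<forall>n\<ge>N. \<exists>S\<in>sets M. {w \<in> space M. Z n w > K * (1 / sqrt (real n))} \<subseteq> S \<and> measure M S < e"
  proof (intro exI allI impI)
    fix n assume n: "n \<ge> max N 1"
    then have sp: "sqrt (real n) > 0" by simp
    have "{w \<in> space M. Z n w > K * (1 / sqrt (real n))} \<subseteq> {w \<in> space M. sqrt (real n) * Z n w > K * 1}"
      using sp by (auto simp: divide_less_eq mult.commute)
    then show "\<exists>S\<in>sets M. {w \<in> space M. Z n w > K * (1 / sqrt (real n))} \<subseteq> S \<and> measure M S < e"
      using K n by (meson max.boundedE order.trans)
  qed
qed



lemma cheb:
  fixes \<xi> :: "nat \<Rightarrow> 'w \<Rightarrow> real" and c :: "nat \<Rightarrow> nat \<Rightarrow> real"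
  assumes P: "prob_space M"
    and meas: "\<And>i. \<xi> i \<in> borel_measurable M"
    and sq: "\<And>i. integrable M (\<lambda>w. (\<xi> i w)\<^sup>2)"
    and unc: "\<And>i k. i \<noteq> k \<Longrightarrow> lebesgue_integral M (\<lambda>w. \<xi> i w * \<xi> k w) = 0"
    and var: "\<And>i. lebesgue_integral M (\<lambda>w. (\<xi> i w)\<^sup>2) \<le> V"
    and coef: "\<And>n. (\<Sum>i<n. (c n i)\<^sup>2) \<le> C * real n"
  shows "Op M (\<lambda>n w. \<bar>\<Sum>i<n. c n i * \<xi> i w\<bar> / real n) (\<lambda>n. 1 / sqrt (real n))"
proof -
  interpret prob_space M by (rule P)
  have intp: "integrable M (\<lambda>w. \<xi> i w * \<xi> k w)" for i k
  proof (rule Bochner_Integration.integrable_bound)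
    show "integrable M (\<lambda>w. (\<xi> i w)\<^sup>2 + (\<xi> k w)\<^sup>2)" using sq by auto
    show "(\<lambda>w. \<xi> i w * \<xi> k w) \<in> borel_measurable M" using meas by measurable
    have "\<bar>a * b\<bar> \<le> \<bar>a\<^sup>2 + b\<^sup>2\<bar>" for a b :: real
    proof -
      have "2 * \<bar>a\<bar> * \<bar>b\<bar> \<le> \<bar>a\<bar>\<^sup>2 + \<bar>b\<bar>\<^sup>2" by (rule sum_squares_bound)
      moreover have "0 \<le> \<bar>a\<bar> * \<bar>b\<bar>" by simp
      moreover have "\<bar>a * b\<bar> = \<bar>a\<bar> * \<bar>b\<bar>" by (rule abs_mult)
      moreover have "\<bar>a\<^sup>2 + b\<^sup>2\<bar> = a\<^sup>2 + b\<^sup>2" by simp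
      ultimately show ?thesis by simp
    qed
    then show "AE w in M. norm (\<xi> i w * \<xi> k w) \<le> norm ((\<xi> i w)\<^sup>2 + (\<xi> k w)\<^sup>2)" by simp
  qed
  have "0 \<le> lebesgue_integral M (\<lambda>w. (\<xi> 0 w)\<^sup>2)" by (rule integral_nonneg_AE) auto
  then have V0: "V \<ge> 0" using var[of 0] by linarith
  define S where "S n w = (\<Sum>i<n. c n i * \<xi> i w)" for n w
  have Smeas: "S n \<in> borel_measurable M" for n unfolding S_def using meas by measurable
  have sqS: "(S n w)\<^sup>2 = (\<Sum>i<n. \<Sum>k<n. c n i * c n k * (\<xi> i w * \<xi> k w))" for n w
    unfolding S_def power2_eq_square sum_product by (simp add: ac_simps)
  have intS: "integrable M (\<lambda>w. (S n w)\<^sup>2)" for n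
    unfolding sqS using intp by auto
  have ES: "lebesgue_integral M (\<lambda>w. (S n w)\<^sup>2) = (\<Sum>i<n. (c n i)\<^sup>2 * lebesgue_integral M (\<lambda>w. (\<xi> i w)\<^sup>2))" for n
  proof -
    have "lebesgue_integral M (\<lambda>w. (S n w)\<^sup>2) = (\<Sum>i<n. \<Sum>k<n. c n i * c n k * lebesgue_integral M (\<lambda>w. \<xi> i w * \<xi> k w))"
      unfolding sqS using intp by (simp add: integral_sum)
    also have "\<dots> = (\<Sum>i<n. \<Sum>k<n. if k = i then (c n i)\<^sup>2 * lebesgue_integral M (\<lambda>w. (\<xi> i w)\<^sup>2) else 0)"
      by (intro sum.cong refl) (auto simp: unc power2_eq_square)
    also have "\<dots> = (\<Sum>i<n. (c n i)\<^sup>2 * lebesgue_integral M (\<lambda>w. (\<xi> i w)\<^sup>2))"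
      by (simp add: sum.delta)
    finally show ?thesis .
  qed
  have ESb: "lebesgue_integral M (\<lambda>w. (S n w)\<^sup>2) \<le> V * (C * real n)" for n
  proof -
    have "lebesgue_integral M (\<lambda>w. (S n w)\<^sup>2) \<le> (\<Sum>i<n. (c n i)\<^sup>2 * V)"
      unfolding ES by (intro sum_mono mult_left_mono var) auto
    also have "\<dots> = V * (\<Sum>i<n. (c n i)\<^sup>2)" by (simp add: sum_distrib_left mult.commute)
    also have "\<dots> \<le> V * (C * real n)" using coef V0 by (intro mult_left_mono) auto
    finally show ?thesis .
  qed
  show ?thesis
    unfolding Op_def
  proof (intro allI impI)
    fix e :: real assume e: "e > 0"
    define K where "K = sqrt ((\<bar>V * C\<bar> + 1) / e)"
    have K0: "K > 0" unfolding K_def using e by simp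
    have K2: "K\<^sup>2 = (\<bar>V * C\<bar> + 1) / e" unfolding K_def using e by simp
    have VCK: "V * C / K\<^sup>2 < e"
    proof -
      have "V * C / K\<^sup>2 = e * (V * C / (\<bar>V * C\<bar> + 1))" unfolding K2 using e by (simp add: field_simps)
      moreover have "V * C / (\<bar>V * C\<bar> + 1) < 1"
        by (subst divide_less_eq_1_pos) (simp_all add: add_pos_nonneg abs_ge_self le_less_trans[OF abs_ge_self])
      ultimately show ?thesis using e by (metis mult.right_neutral mult_strict_left_mono)
    qed
    show "\<exists>K N. \<forall>n\<ge>N. \<exists>S\<in>sets M. {w \<in> space M. \<bar>\<Sum>i<n. c n i * \<xi> i w\<bar> / real n > K * (1 / sqrt (real n))} \<subseteq> S \<and> measure M S < e"
    proof (intro exI allI impI)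
      fix n :: nat assume n: "n \<ge> 1"
      then have n0: "real n > 0" by simp
      let ?A = "{w \<in> space M. (S n w)\<^sup>2 \<ge> K\<^sup>2 * real n}"
      have Asets: "?A \<in> sets M" using Smeas by measurable
      have sub: "{w \<in> space M. \<bar>\<Sum>i<n. c n i * \<xi> i w\<bar> / real n > K * (1 / sqrt (real n))} \<subseteq> ?A"
      proof safe
        fix w assume w: "w \<in> space M" "\<bar>\<Sum>i<n. c n i * \<xi> i w\<bar> / real n > K * (1 / sqrt (real n))"
        have "K * (1 / sqrt (real n)) * real n = K * sqrt (real n)"
          using n0 by (simp add: field_simps real_div_sqrt)
        moreover have "\<bar>S n w\<bar> > K * (1 / sqrt (real n)) * real n"
          using w(2) n0 unfolding S_def by (simp add: less_divide_eq)
        ultimately have "\<bar>S n w\<bar> > K * sqrt (real n)" by simp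
        then have "(K * sqrt (real n))\<^sup>2 < (\<bar>S n w\<bar>)\<^sup>2"
          using K0 n0 by (intro power_strict_mono) auto
        then show "(S n w)\<^sup>2 \<ge> K\<^sup>2 * real n" using n0 by (simp add: power_mult_distrib)
      qed
      have "measure M ?A \<le> lebesgue_integral M (\<lambda>w. (S n w)\<^sup>2) / (K\<^sup>2 * real n)"
        using intS n0 K0 by (intro integral_Markov_inequality_measure[where A="space M"]) auto
      also have "\<dots> \<le> V * (C * real n) / (K\<^sup>2 * real n)"
        using ESb[of n] n0 K0 by (intro divide_right_mono) auto
      also have "\<dots> = V * C / K\<^sup>2" using n0 by simp
      finally have "measure M ?A < e" using VCK by linarith
      then show "\<exists>S\<in>sets M. {w \<in> space M. \<bar>\<Sum>i<n. c n i * \<xi> i w\<bar> / real n > K * (1 / sqrt (real n))} \<subseteq> S \<and> measure M S < e"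
        using Asets sub by blast
    qed
  qed
qed



lemma gen_noise:
  fixes M :: "'w measure" and eps :: "nat \<Rightarrow> nat \<Rightarrow> 'w \<Rightarrow> real" and h :: "real \<Rightarrow> real"
  assumes P: "prob_space M"
    and sig: "\<sigma> \<ge> 0"
    and noise_rv: "\<And>i j. eps i j \<in> borel_measurable M"
    and noise_indep: "prob_space.indep_vars M (\<lambda>_. borel) (\<lambda>(i, j). eps i j) (UNIV \<times> {0, 1})"
    and noise_gauss: "\<sigma> > 0 \<Longrightarrow> \<forall>i j. distributed M lborel (eps i j) (normal_density 0 \<sigma>)"
    and noise_zero: "\<sigma> = 0 \<Longrightarrow> \<forall>i j. AE w in M. eps i j w = 0"
    and hmeas: "h \<in> borel_measurable borel"
    and hint2: "\<sigma> > 0 \<Longrightarrow> integrable lborel (\<lambda>x. normal_density 0 \<sigma> x * (h x)\<^sup>2)"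
    and hint1: "\<sigma> > 0 \<Longrightarrow> integrable lborel (\<lambda>x. normal_density 0 \<sigma> x * h x)"
    and hmean: "\<sigma> > 0 \<Longrightarrow> integral\<^sup>L lborel (\<lambda>x. normal_density 0 \<sigma> x * h x) = 0"
    and h0: "\<sigma> = 0 \<Longrightarrow> h 0 = 0"
    and j: "j \<in> {0, 1}"
  shows "\<exists>V. (\<forall>i. (\<lambda>w. h (eps i j w)) \<in> borel_measurable M)
           \<and> (\<forall>i. integrable M (\<lambda>w. (h (eps i j w))\<^sup>2))
           \<and> (\<forall>i k. i \<noteq> k \<longrightarrow> integral\<^sup>L M (\<lambda>w. h (eps i j w) * h (eps k j w)) = 0)
           \<and> (\<forall>i. integral\<^sup>L M (\<lambda>w. (h (eps i j w))\<^sup>2) \<le> V)"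
proof -
  interpret prob_space M by (rule P)
  have hm: "(\<lambda>w. h (eps i j w)) \<in> borel_measurable M" for i j
    using measurable_compose[OF noise_rv hmeas] by (simp add: comp_def)
  show ?thesis
  proof (cases "\<sigma> > 0")
    case True
    have D: "distributed M lborel (eps i j) (normal_density 0 \<sigma>)" for i
      using noise_gauss True by auto
    have nn: "0 \<le> normal_density 0 \<sigma> x" for x by (rule normal_density_nonneg)
    have int2: "integrable M (\<lambda>w. (h (eps i j w))\<^sup>2)" for i
      using distributed_integrable[OF D, of "\<lambda>x. (h x)\<^sup>2"] hint2[OF True] hmeas nn by auto
    have int1: "integrable M (\<lambda>w. h (eps i j w))" for i
      using distributed_integrable[OF D, of "\<lambda>x. h x"] hint1[OF True] hmeas nn by auto
    have mean: "integral\<^sup>L M (\<lambda>w. h (eps i j w)) = 0" for i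
      using distributed_integral[OF D, of "\<lambda>x. h x"] hmean[OF True] hmeas nn by auto
    have E2: "integral\<^sup>L M (\<lambda>w. (h (eps i j w))\<^sup>2) = integral\<^sup>L lborel (\<lambda>x. normal_density 0 \<sigma> x * (h x)\<^sup>2)" for i
      using distributed_integral[OF D, of "\<lambda>x. (h x)\<^sup>2"] hmeas nn by auto
    have IZ: "indep_vars (\<lambda>_. borel) (\<lambda>x w. h ((\<lambda>(i, j). eps i j) x w)) (UNIV \<times> {0, 1})"
      by (rule indep_vars_compose2[OF noise_indep]) (use hmeas in auto)
    have unc: "integral\<^sup>L M (\<lambda>w. h (eps i j w) * h (eps k j w)) = 0" if ik: "i \<noteq> k" for i k
    proof -
      let ?I = "{(i, j), (k, j)}"
      have IZ2: "indep_vars (\<lambda>_. borel) (\<lambda>x w. h ((\<lambda>(i, j). eps i j) x w)) ?I"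
        by (rule indep_vars_subset[OF IZ]) (use j in auto)
      have "integral\<^sup>L M (\<lambda>w. \<Prod>x\<in>?I. h ((\<lambda>(i, j). eps i j) x w)) = (\<Prod>x\<in>?I. integral\<^sup>L M (\<lambda>w. h ((\<lambda>(i, j). eps i j) x w)))"
        by (rule indep_vars_lebesgue_integral[OF _ IZ2]) (auto simp: int1)
      then show ?thesis using ik by (simp add: mean)
    qed
    show ?thesis
      by (intro exI[of _ "integral\<^sup>L lborel (\<lambda>x. normal_density 0 \<sigma> x * (h x)\<^sup>2)"]) (auto simp: hm int2 unc E2)
  next
    case False
    then have s0: "\<sigma> = 0" using sig by simp
    have Z: "AE w in M. h (eps i j w) = 0" for i
    proof -
      have "AE w in M. eps i j w = 0" using noise_zero[OF s0] by auto
      then show ?thesis by eventually_elim (simp add: h0[OF s0])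
    qed
    have int2: "integrable M (\<lambda>w. (h (eps i j w))\<^sup>2)" for i
    proof (rule integrable_cong_AE_imp[of M "\<lambda>_. 0"])
      show "(\<lambda>w. (h (eps i j w))\<^sup>2) \<in> borel_measurable M" using hm[of i j] by measurable
      show "AE w in M. 0 = (h (eps i j w))\<^sup>2" using Z[of i] by eventually_elim simp
    qed simp
    have E2: "integral\<^sup>L M (\<lambda>w. (h (eps i j w))\<^sup>2) = 0" for i
      using integral_cong_AE[of "\<lambda>w. (h (eps i j w))\<^sup>2" M "\<lambda>_. 0"] Z[of i] hm[of i j] by auto
    have unc: "integral\<^sup>L M (\<lambda>w. h (eps i j w) * h (eps k j w)) = 0" for i k
    proof -
      have "AE x in M. h (eps i j x) = 0 \<or> h (eps k j x) = 0" using Z[of i] by eventually_elim simp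
      then show ?thesis
        using integral_cong_AE[of "\<lambda>w. h (eps i j w) * h (eps k j w)" M "\<lambda>_. 0"] hm[of i j] hm[of k j]
        by auto
    qed
    show ?thesis
      by (intro exI[of _ 0]) (auto simp: hm int2 unc E2)
  qed
qed



locale cam =
  fixes M :: "'w measure"
    and fx fy :: real and R :: "real^3^3" and t :: "real^3"
    and p :: "nat \<Rightarrow> real^3"
    and \<sigma> :: real
    and eps :: "nat \<Rightarrow> nat \<Rightarrow> 'w \<Rightarrow> real"
    and s2 :: "nat \<Rightarrow> 'w \<Rightarrow> real"
  assumes P: "prob_space M"
    and f: "fx > 0" "fy > 0"
    and rot: "orthogonal_matrix R" "det R = 1"
    and front: "\<And>i. depth R t (p i) > 0"
    and sig: "\<sigma> \<ge> 0"
    and noise_rv: "\<And>i j. eps i j \<in> borel_measurable M"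
    and noise_indep: "prob_space.indep_vars M (\<lambda>_. borel) (\<lambda>(i, j). eps i j) (UNIV \<times> {0, 1})"
    and noise_gauss: "\<sigma> > 0 \<Longrightarrow> \<forall>i j. distributed M lborel (eps i j) (normal_density 0 \<sigma>)"
    and noise_zero: "\<sigma> = 0 \<Longrightarrow> \<forall>i j. AE w in M. eps i j w = 0"
    and bounded_pts: "bounded (range p)"
    and BtB_conv: "\<exists>L. ((\<lambda>n. (1 / real n) *\<^sub>R BtB fx fy R t p n) \<longlonglongrightarrow> L) \<and> invertible L"
    and s2_rate: "Op M (\<lambda>n w. sqrt (real n) * \<bar>s2 n w - \<sigma>\<^sup>2\<bar>) (\<lambda>_. 1)"
begin

lemma noise_gen_Op:
  fixes h :: "real \<Rightarrow> real"
  assumes hmeas: "h \<in> borel_measurable borel"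
    and hint2: "\<sigma> > 0 \<Longrightarrow> integrable lborel (\<lambda>x. normal_density 0 \<sigma> x * (h x)\<^sup>2)"
    and hint1: "\<sigma> > 0 \<Longrightarrow> integrable lborel (\<lambda>x. normal_density 0 \<sigma> x * h x)"
    and hmean: "\<sigma> > 0 \<Longrightarrow> integral\<^sup>L lborel (\<lambda>x. normal_density 0 \<sigma> x * h x) = 0"
    and h0: "\<sigma> = 0 \<Longrightarrow> h 0 = 0"
    and j: "j \<in> {0, 1}"
    and coef: "\<And>n. (\<Sum>i<n. (c n i)\<^sup>2) \<le> C * real n"
  shows "Op M (\<lambda>n w. \<bar>\<Sum>i<n. c n i * h (eps i j w)\<bar> / real n) (\<lambda>n. 1 / sqrt (real n))"
proof -
  obtain V where V: "\<forall>i. (\<lambda>w. h (eps i j w)) \<in> borel_measurable M"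
           "\<forall>i. integrable M (\<lambda>w. (h (eps i j w))\<^sup>2)"
           "\<forall>i k. i \<noteq> k \<longrightarrow> integral\<^sup>L M (\<lambda>w. h (eps i j w) * h (eps k j w)) = 0"
           "\<forall>i. integral\<^sup>L M (\<lambda>w. (h (eps i j w))\<^sup>2) \<le> V"
    using gen_noise[OF P sig noise_rv noise_indep noise_gauss noise_zero hmeas hint2 hint1 hmean h0 j] by blast
  show ?thesis
    by (rule cheb[OF P, of "\<lambda>i w. h (eps i j w)" V c C]) (use V coef in auto)
qed

lemma noise1_Op:
  assumes j: "j \<in> {0, 1}" and coef: "\<And>n. (\<Sum>i<n. (c n i)\<^sup>2) \<le> C * real n"
  shows "Op M (\<lambda>n w. \<bar>\<Sum>i<n. c n i * eps i j w\<bar> / real n) (\<lambda>n. 1 / sqrt (real n))"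
proof -
  have "Op M (\<lambda>n w. \<bar>\<Sum>i<n. c n i * (\<lambda>x. x) (eps i j w)\<bar> / real n) (\<lambda>n. 1 / sqrt (real n))"
  proof (rule noise_gen_Op[OF _ _ _ _ _ j coef])
    show "integrable lborel (\<lambda>x. normal_density 0 \<sigma> x * x\<^sup>2)" if s: "\<sigma> > 0"
      using integrable_normal_moment[OF s, of 0 2] by simp
    show "integrable lborel (\<lambda>x. normal_density 0 \<sigma> x * x)" if s: "\<sigma> > 0"
      using integrable_normal_moment[OF s, of 0 1] by simp
    show "integral\<^sup>L lborel (\<lambda>x. normal_density 0 \<sigma> x * x) = 0" if "\<sigma> > 0"
      using integral_normal_moment_odd[OF that, of 0 0] by simp
  qed auto
  then show ?thesis by simp
qed

lemma noise2_Op: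
  assumes j: "j \<in> {0, 1}" and coef: "\<And>n. (\<Sum>i<n. (c n i)\<^sup>2) \<le> C * real n"
  shows "Op M (\<lambda>n w. \<bar>\<Sum>i<n. c n i * ((eps i j w)\<^sup>2 - \<sigma>\<^sup>2)\<bar> / real n) (\<lambda>n. 1 / sqrt (real n))"
proof -
  have i4: "integrable lborel (\<lambda>x. normal_density 0 \<sigma> x * x ^ 4)" if s: "\<sigma> > 0"
    using integrable_normal_moment[OF s, of 0 4] by simp
  have i2: "integrable lborel (\<lambda>x. normal_density 0 \<sigma> x * x\<^sup>2)" if s: "\<sigma> > 0"
    using integrable_normal_moment[OF s, of 0 2] by simp
  have i0: "integrable lborel (\<lambda>x. normal_density 0 \<sigma> x)" if s: "\<sigma> > 0"
    using integrable_normal_moment[OF s, of 0 0] by simp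
  have "Op M (\<lambda>n w. \<bar>\<Sum>i<n. c n i * (\<lambda>x. x\<^sup>2 - \<sigma>\<^sup>2) (eps i j w)\<bar> / real n) (\<lambda>n. 1 / sqrt (real n))"
  proof (rule noise_gen_Op[OF _ _ _ _ _ j coef])
    have eq: "(\<lambda>x. normal_density 0 \<sigma> x * (x\<^sup>2 - \<sigma>\<^sup>2)\<^sup>2)
        = (\<lambda>x. normal_density 0 \<sigma> x * x ^ 4 - 2 * \<sigma>\<^sup>2 * (normal_density 0 \<sigma> x * x\<^sup>2) + \<sigma>^4 * normal_density 0 \<sigma> x)"
      by (auto simp: power2_eq_square algebra_simps power4_eq_xxxx)
    show "integrable lborel (\<lambda>x. normal_density 0 \<sigma> x * (x\<^sup>2 - \<sigma>\<^sup>2)\<^sup>2)" if s: "\<sigma> > 0"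
      unfolding eq using i4[OF s] i2[OF s] i0[OF s] by auto
    have eq1: "(\<lambda>x. normal_density 0 \<sigma> x * (x\<^sup>2 - \<sigma>\<^sup>2)) = (\<lambda>x. normal_density 0 \<sigma> x * x\<^sup>2 - \<sigma>\<^sup>2 * normal_density 0 \<sigma> x)"
      by (auto simp: algebra_simps)
    show "integrable lborel (\<lambda>x. normal_density 0 \<sigma> x * (x\<^sup>2 - \<sigma>\<^sup>2))" if s: "\<sigma> > 0"
      unfolding eq1 using i2[OF s] i0[OF s] by auto
    show "integral\<^sup>L lborel (\<lambda>x. normal_density 0 \<sigma> x * (x\<^sup>2 - \<sigma>\<^sup>2)) = 0" if s: "\<sigma> > 0"
    proof -
      have "integral\<^sup>L lborel (\<lambda>x. normal_density 0 \<sigma> x * x\<^sup>2) = \<sigma>\<^sup>2"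
        using integral_normal_moment_even[OF s, of 0 1] s by (simp add: field_simps power2_eq_square)
      moreover have "integral\<^sup>L lborel (\<lambda>x. normal_density 0 \<sigma> x) = 1"
        using integral_normal_moment_even[OF s, of 0 0] by simp
      ultimately show ?thesis unfolding eq1 using i2[OF s] i0[OF s] by simp
    qed
  qed auto
  then show ?thesis by simp
qed

end


lemma idx11_lt: "idx11 k < 11"
  unfolding idx11_def using Rep_bit1[of k] by (simp add: nat_less_iff)

lemma lt11: "(m::nat) < 11 \<Longrightarrow> m = 0 \<or> m = 1 \<or> m = 2 \<or> m = 3 \<or> m = 4 \<or> m = 5 \<or> m = 6 \<or> m = 7 \<or> m = 8 \<or> m = 9 \<or> m = 10"
  by (simp add: eval_nat_numeral less_Suc_eq)

lemma idx11_inj: "inj idx11"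
proof
  fix a b :: 11 assume "idx11 a = idx11 b"
  then have "Rep_bit1 a = Rep_bit1 b" unfolding idx11_def using Rep_bit1[of a] Rep_bit1[of b] by (simp add: eq_nat_nat_iff)
  then show "a = b" by (simp add: Rep_bit1_inject)
qed

lemma idx11_image: "range idx11 = {..<11}"
proof
  show "range idx11 \<subseteq> {..<11}" using idx11_lt by auto
  show "{..<11} \<subseteq> range idx11"
  proof
    fix m :: nat assume "m \<in> {..<11}"
    then have m: "int m \<in> {0..<1 + 2 * int CARD(5)}" by simp
    have "idx11 (Abs_bit1 (int m)) = m" unfolding idx11_def using Abs_bit1_inverse[OF m] by simp
    then show "m \<in> range idx11" by (metis rangeI)
  qed
qed

lemma sum11: "(\<Sum>k\<in>UNIV. f (idx11 k)) = (\<Sum>m<11. f m)"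
proof -
  have "(\<Sum>m\<in>range idx11. f m) = (\<Sum>k\<in>UNIV. f (idx11 k))"
    by (rule sum.reindex[OF inj_on_subset[OF idx11_inj], simplified])
  then show ?thesis unfolding idx11_image by simp
qed

lemma vec11_nth: "vec11 xs $ k = xs ! idx11 k"
  unfolding vec11_def by simp

lemma rowU_comp: "rowU fx pb q u $ k = rowU fx pb q 0 $ k + u * rowG pb q $ k"
  unfolding rowU_def rowG_def vec11_nth using lt11[OF idx11_lt[of k]]
  by (auto simp: v3list_def algebra_simps)

lemma rowV_comp: "rowV fy pb q v $ k = rowV fy pb q 0 $ k + v * rowG pb q $ k"
  unfolding rowV_def rowG_def vec11_nth using lt11[OF idx11_lt[of k]]
  by (auto simp: v3list_def algebra_simps)

lemma rowU0G: "rowU fx pb q 0 $ k * rowG pb q $ k = 0"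
  unfolding rowU_def rowG_def vec11_nth using lt11[OF idx11_lt[of k]]
  by (auto simp: v3list_def)

lemma rowV0G: "rowV fy pb q 0 $ k * rowG pb q $ k = 0"
  unfolding rowV_def rowG_def vec11_nth using lt11[OF idx11_lt[of k]]
  by (auto simp: v3list_def)

lemma comp3_le: "\<bar>(x::real^3) $ j\<bar> \<le> norm x"
  by (rule component_le_norm_cart)

lemma rowG_bound: "\<bar>rowG pb q $ k\<bar> \<le> norm (q - pb)"
proof -
  have "\<bar>(q - pb) $ j\<bar> \<le> norm (q - pb)" for j by (rule component_le_norm_cart)
  then have "\<bar>pb $ j - q $ j\<bar> \<le> norm (q - pb)" for j by (simp add: abs_minus_commute)
  then show ?thesis
    unfolding rowG_def vec11_nth using lt11[OF idx11_lt[of k]]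
    by (auto simp: v3list_def)
qed

lemma rowU0_bound: "\<bar>rowU fx pb q 0 $ k\<bar> \<le> \<bar>fx\<bar> * norm q + \<bar>fx\<bar>"
proof -
  have "\<bar>q $ j\<bar> \<le> norm q" for j by (rule component_le_norm_cart)
  then have "\<bar>fx * q $ j\<bar> \<le> \<bar>fx\<bar> * norm q" for j by (simp add: abs_mult mult_left_mono)
  then show ?thesis
    unfolding rowU_def vec11_nth using lt11[OF idx11_lt[of k]]
    by (auto simp: v3list_def intro: add_increasing2)
qed

lemma rowV0_bound: "\<bar>rowV fy pb q 0 $ k\<bar> \<le> \<bar>fy\<bar> * norm q + \<bar>fy\<bar>"
proof -
  have "\<bar>q $ j\<bar> \<le> norm q" for j by (rule component_le_norm_cart)
  then have "\<bar>fy * q $ j\<bar> \<le> \<bar>fy\<bar> * norm q" for j by (simp add: abs_mult mult_left_mono)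
  then show ?thesis
    unfolding rowV_def vec11_nth using lt11[OF idx11_lt[of k]]
    by (auto simp: v3list_def intro: add_increasing2)
qed


lemma inner_vec11: "vec11 xs \<bullet> vec11 ys = (\<Sum>m<11. xs ! m * ys ! m)"
  unfolding inner_vec_def vec11_nth using sum11[of "\<lambda>m. xs ! m * ys ! m"] by simp

lemma sum_lt11: "(\<Sum>m<(11::nat). f m) = f 0 + f 1 + f 2 + f 3 + f 4 + f 5 + f 6 + f 7 + f 8 + f 9 + (f 10 :: real)"
  by (simp add: eval_nat_numeral)

lemma inner3: "(x::real^3) \<bullet> y = x$1 * y$1 + x$2 * y$2 + x$3 * y$3"
  unfolding inner_vec_def by (simp add: sum_3)

lemma rowU_theta:
  "rowU fx pb q u \<bullet> vec11 (v3list r3 @ v3list r1 @ [t1] @ v3list r2 @ [t2])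
     = - u * ((q - pb) \<bullet> r3) + fx * (q \<bullet> r1) + fx * t1"
  unfolding rowU_def inner_vec11 sum_lt11 by (simp add: v3list_def inner3 algebra_simps)

lemma rowV_theta:
  "rowV fy pb q v \<bullet> vec11 (v3list r3 @ v3list r1 @ [t1] @ v3list r2 @ [t2])
     = - v * ((q - pb) \<bullet> r3) + fy * (q \<bullet> r2) + fy * t2"
  unfolding rowV_def inner_vec11 sum_lt11 by (simp add: v3list_def inner3 algebra_simps)



definition U0 :: "real \<Rightarrow> real^3 \<Rightarrow> real^3 \<Rightarrow> real^11" where "U0 fx pb q = rowU fx pb q 0"
definition V0 :: "real \<Rightarrow> real^3 \<Rightarrow> real^3 \<Rightarrow> real^11" where "V0 fy pb q = rowV fy pb q 0"

lemma rowU_c: "rowU fx pb q u $ k = U0 fx pb q $ k + u * rowG pb q $ k"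
  unfolding U0_def by (rule rowU_comp)
lemma rowV_c: "rowV fy pb q u $ k = V0 fy pb q $ k + u * rowG pb q $ k"
  unfolding V0_def by (rule rowV_comp)
lemma U0G: "U0 fx pb q $ k * rowG pb q $ k = 0" unfolding U0_def by (rule rowU0G)
lemma V0G: "V0 fy pb q $ k * rowG pb q $ k = 0" unfolding V0_def by (rule rowV0G)

lemma norm_mat_le: "norm (A::real^'n^'m) \<le> (\<Sum>k\<in>UNIV. \<Sum>l\<in>UNIV. \<bar>A $ k $ l\<bar>)"
proof -
  have "norm A \<le> (\<Sum>k\<in>UNIV. norm (A $ k))" by (simp add: norm_vec_def L2_set_le_sum)
  also have "\<dots> \<le> (\<Sum>k\<in>UNIV. \<Sum>l\<in>UNIV. \<bar>A $ k $ l\<bar>)" by (intro sum_mono norm_le_l1_cart)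
  finally show ?thesis .
qed

lemma mat_comp_le: "\<bar>(A::real^'n^'m) $ k $ l\<bar> \<le> norm A"
  using component_le_norm_cart[of "A $ k" l] Finite_Cartesian_Product.norm_nth_le[of A k] by linarith

lemma gram_comp: "gram fx fy p U V n $ k $ l =
   (\<Sum>i<n. rowU fx (pbar p n) (p i) (U i) $ k * rowU fx (pbar p n) (p i) (U i) $ l
         + rowV fy (pbar p n) (p i) (V i) $ k * rowV fy (pbar p n) (p i) (V i) $ l)"
  unfolding gram_def outer11_def by simp

lemma GtG_comp: "GtG p n $ k $ l = (\<Sum>i<n. 2 * (rowG (pbar p n) (p i) $ k * rowG (pbar p n) (p i) $ l))"
  unfolding GtG_def outer11_def by simp

lemma cross_comp: "cross fx fy p U V bu bv n $ k =
   (\<Sum>i<n. bu i * rowU fx (pbar p n) (p i) (U i) $ k + bv i * rowV fy (pbar p n) (p i) (V i) $ k)"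
  unfolding cross_def by simp

lemma Gt1_comp: "Gt1 p n $ k = (\<Sum>i<n. 2 * rowG (pbar p n) (p i) $ k)"
  unfolding Gt1_def by simp

context cam begin

definition "uoi i = uo fx R t (p i)"
definition "voi i = vo fy R t (p i)"
definition "g n i = rowG (pbar p n) (p i)"
definition "aU n i = U0 fx (pbar p n) (p i)"
definition "aV n i = V0 fy (pbar p n) (p i)"
definition "rU n i = rowU fx (pbar p n) (p i) (uoi i)"
definition "rV n i = rowV fy (pbar p n) (p i) (voi i)"

lemma P_bound: "\<exists>Pb. Pb \<ge> 0 \<and> (\<forall>i. norm (p i) \<le> Pb)"
  using bounded_pts unfolding bounded_iff by (meson norm_ge_zero order_trans rangeI)

lemma pbar_bound: assumes "\<forall>i. norm (p i) \<le> Pb" "Pb \<ge> 0" shows "norm (pbar p n) \<le> Pb"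
proof (cases "n = 0")
  case True then show ?thesis using assms by (simp add: pbar_def)
next
  case False
  have "norm (\<Sum>i<n. p i) \<le> (\<Sum>i<n. norm (p i))" by (rule norm_sum)
  also have "\<dots> \<le> real n * Pb" using assms sum_mono[of "{..<n}" "\<lambda>i. norm (p i)" "\<lambda>_. Pb"] by auto
  finally show ?thesis using False by (simp add: pbar_def divide_le_eq mult.commute)
qed

lemma consts_bound: "\<exists>A G. A \<ge> 0 \<and> G \<ge> 0 \<and> (\<forall>n i k. \<bar>g n i $ k\<bar> \<le> G \<and> \<bar>aU n i $ k\<bar> \<le> A \<and> \<bar>aV n i $ k\<bar> \<le> A)"
proof -
  obtain Pb where Pb: "Pb \<ge> 0" "\<forall>i. norm (p i) \<le> Pb" using P_bound by blast
  have G: "\<bar>g n i $ k\<bar> \<le> 2 * Pb" for n i k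
  proof -
    have "\<bar>g n i $ k\<bar> \<le> norm (p i - pbar p n)" unfolding g_def by (rule rowG_bound)
    also have "\<dots> \<le> norm (p i) + norm (pbar p n)" by (rule norm_triangle_ineq4)
    also have "\<dots> \<le> 2 * Pb" using Pb(2)[rule_format, of i] pbar_bound[OF Pb(2) Pb(1), of n] by linarith
    finally show ?thesis .
  qed
  have A1: "\<bar>aU n i $ k\<bar> \<le> \<bar>fx\<bar> * Pb + \<bar>fx\<bar> + \<bar>fy\<bar> * Pb + \<bar>fy\<bar>" for n i k
  proof -
    have "\<bar>aU n i $ k\<bar> \<le> \<bar>fx\<bar> * norm (p i) + \<bar>fx\<bar>" unfolding aU_def U0_def by (rule rowU0_bound)
    also have "\<dots> \<le> \<bar>fx\<bar> * Pb + \<bar>fx\<bar>" using Pb by (simp add: mult_left_mono)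
    moreover have "0 \<le> \<bar>fy\<bar> * Pb + \<bar>fy\<bar>" using Pb(1) by simp
    ultimately show ?thesis by linarith
  qed
  have A2: "\<bar>aV n i $ k\<bar> \<le> \<bar>fx\<bar> * Pb + \<bar>fx\<bar> + \<bar>fy\<bar> * Pb + \<bar>fy\<bar>" for n i k
  proof -
    have "\<bar>aV n i $ k\<bar> \<le> \<bar>fy\<bar> * norm (p i) + \<bar>fy\<bar>" unfolding aV_def V0_def by (rule rowV0_bound)
    also have "\<dots> \<le> \<bar>fy\<bar> * Pb + \<bar>fy\<bar>" using Pb by (simp add: mult_left_mono)
    moreover have "0 \<le> \<bar>fx\<bar> * Pb + \<bar>fx\<bar>" using Pb(1) by simp
    ultimately show ?thesis by linarith
  qed
  show ?thesis
    by (rule exI[of _ "\<bar>fx\<bar> * Pb + \<bar>fx\<bar> + \<bar>fy\<bar> * Pb + \<bar>fy\<bar>"], rule exI[of _ "2 * Pb"])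
       (use Pb A1 A2 G in auto)
qed

lemma BtB_diag: "BtB fx fy R t p n $ k $ k = (\<Sum>i<n. (rU n i $ k)\<^sup>2 + (rV n i $ k)\<^sup>2)"
  unfolding BtB_def gram_comp rU_def rV_def uoi_def voi_def by (simp add: power2_eq_square)

lemma BtB_bound: "\<exists>T. \<forall>n k. BtB fx fy R t p n $ k $ k \<le> T * real n"
proof -
  obtain L where L: "(\<lambda>n. (1 / real n) *\<^sub>R BtB fx fy R t p n) \<longlonglongrightarrow> L" using BtB_conv by blast
  then have "bounded (range (\<lambda>n. (1 / real n) *\<^sub>R BtB fx fy R t p n))"
    using convergent_imp_bounded by blast
  then obtain T where T: "\<forall>n. norm ((1 / real n) *\<^sub>R BtB fx fy R t p n) \<le> T"
    unfolding bounded_iff by blast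
  have "BtB fx fy R t p n $ k $ k \<le> T * real n" for n k
  proof (cases "n = 0")
    case True then show ?thesis by (simp add: BtB_def gram_def)
  next
    case False
    have "\<bar>((1 / real n) *\<^sub>R BtB fx fy R t p n) $ k $ k\<bar> \<le> T" using T mat_comp_le order_trans by blast
    then have "\<bar>BtB fx fy R t p n $ k $ k\<bar> / real n \<le> T" by simp
    then show ?thesis using False by (simp add: divide_le_eq)
  qed
  then show ?thesis by blast
qed

lemma rU_sq: "(uoi i * g n i $ k)\<^sup>2 \<le> (rU n i $ k)\<^sup>2"
proof -
  have "rU n i $ k = aU n i $ k + uoi i * g n i $ k" unfolding rU_def aU_def g_def by (rule rowU_c)
  moreover have "aU n i $ k * g n i $ k = 0" unfolding aU_def g_def by (rule U0G)
  moreover have h: "aU n i $ k * (uoi i * g n i $ k) = 0"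
    using calculation(2) by (metis mult.left_commute mult_zero_right)
  ultimately have "(rU n i $ k)\<^sup>2 = (aU n i $ k)\<^sup>2 + 2 * (aU n i $ k * (uoi i * g n i $ k)) + (uoi i * g n i $ k)\<^sup>2"
    by (simp add: power2_eq_square algebra_simps)
  then show ?thesis using h by simp
qed

lemma rV_sq: "(voi i * g n i $ k)\<^sup>2 \<le> (rV n i $ k)\<^sup>2"
proof -
  have "rV n i $ k = aV n i $ k + voi i * g n i $ k" unfolding rV_def aV_def g_def by (rule rowV_c)
  moreover have "aV n i $ k * g n i $ k = 0" unfolding aV_def g_def by (rule V0G)
  moreover have h: "aV n i $ k * (voi i * g n i $ k) = 0"
    using calculation(2) by (metis mult.left_commute mult_zero_right)
  ultimately have "(rV n i $ k)\<^sup>2 = (aV n i $ k)\<^sup>2 + 2 * (aV n i $ k * (voi i * g n i $ k)) + (voi i * g n i $ k)\<^sup>2"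
    by (simp add: power2_eq_square algebra_simps)
  then show ?thesis using h by simp
qed

lemma coefB:
  assumes T: "\<forall>n k. BtB fx fy R t p n $ k $ k \<le> T * real n"
    and c: "\<And>n i. (c n i)\<^sup>2 \<le> \<alpha> + \<beta> * ((rU n i $ k)\<^sup>2 + (rV n i $ k)\<^sup>2)" and b: "\<beta> \<ge> 0"
  shows "(\<Sum>i<n. (c n i)\<^sup>2) \<le> (\<alpha> + \<beta> * T) * real n"
proof -
  have "(\<Sum>i<n. (c n i)\<^sup>2) \<le> (\<Sum>i<n. \<alpha> + \<beta> * ((rU n i $ k)\<^sup>2 + (rV n i $ k)\<^sup>2))"
    by (intro sum_mono c)
  also have "\<dots> = \<alpha> * real n + \<beta> * BtB fx fy R t p n $ k $ k"
    by (simp add: BtB_diag sum.distrib sum_distrib_left distrib_left)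
  also have "\<dots> \<le> \<alpha> * real n + \<beta> * (T * real n)" using T b by (simp add: mult_left_mono)
  finally show ?thesis by (simp add: algebra_simps)
qed

end


lemma sq_prod_le:
  fixes x y A G :: real
  assumes "\<bar>x\<bar> \<le> A" "\<bar>y\<bar> \<le> G"
  shows "(x * y)\<^sup>2 \<le> A\<^sup>2 * G\<^sup>2"
proof -
  have "x\<^sup>2 \<le> A\<^sup>2" "y\<^sup>2 \<le> G\<^sup>2"
    using assms power_mono[of "\<bar>x\<bar>" A 2] power_mono[of "\<bar>y\<bar>" G 2] by auto
  then show ?thesis by (simp add: power_mult_distrib mult_mono zero_le_power2)
qed

lemma sq3_le: "(x + y + z)\<^sup>2 \<le> 3 * (x\<^sup>2 + y\<^sup>2 + z\<^sup>2)" for x y z :: real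
proof -
  have "0 \<le> (x - y)\<^sup>2 + (y - z)\<^sup>2 + (x - z)\<^sup>2" by simp
  then show ?thesis by (simp add: power2_eq_square algebra_simps)
qed

lemma abs4: "\<bar>(1 / real n) * (a + b + c + d)\<bar> \<le> \<bar>a\<bar> / real n + \<bar>b\<bar> / real n + \<bar>c\<bar> / real n + \<bar>d\<bar> / real n"
proof -
  have "\<bar>(1 / real n) * (a + b + c + d)\<bar> = \<bar>a + b + c + d\<bar> / real n" by (simp add: abs_mult)
  also have "\<dots> \<le> (\<bar>a\<bar> + \<bar>b\<bar> + \<bar>c\<bar> + \<bar>d\<bar>) / real n"
    by (intro divide_right_mono) (auto intro: order.trans[OF abs_triangle_ineq] add_mono)
  finally show ?thesis by (simp add: add_divide_distrib)
qed

context cam begin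

definition "cA k l n i = aU n i $ k * g n i $ l + g n i $ k * aU n i $ l + 2 * uoi i * (g n i $ k * g n i $ l)"
definition "cB k l n i = aV n i $ k * g n i $ l + g n i $ k * aV n i $ l + 2 * voi i * (g n i $ k * g n i $ l)"
definition "gg k l n i = g n i $ k * g n i $ l"

lemma claim1_entry:
  "((1 / real n) *\<^sub>R AtA fx fy R t p eps n w - (1 / real n) *\<^sub>R BtB fx fy R t p n
     - \<sigma>\<^sup>2 *\<^sub>R ((1 / real n) *\<^sub>R GtG p n)) $ k $ l
   = (1 / real n) * ((\<Sum>i<n. cA k l n i * eps i 0 w) + (\<Sum>i<n. gg k l n i * ((eps i 0 w)\<^sup>2 - \<sigma>\<^sup>2))
       + (\<Sum>i<n. cB k l n i * eps i 1 w) + (\<Sum>i<n. gg k l n i * ((eps i 1 w)\<^sup>2 - \<sigma>\<^sup>2)))"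
proof -
  have hterm: "(aU n i $ k + (uoi i + e0) * g n i $ k) * (aU n i $ l + (uoi i + e0) * g n i $ l)
      + (aV n i $ k + (voi i + e1) * g n i $ k) * (aV n i $ l + (voi i + e1) * g n i $ l)
      - ((aU n i $ k + uoi i * g n i $ k) * (aU n i $ l + uoi i * g n i $ l)
      + (aV n i $ k + voi i * g n i $ k) * (aV n i $ l + voi i * g n i $ l))
      - \<sigma>\<^sup>2 * (2 * (g n i $ k * g n i $ l))
      = cA k l n i * e0 + gg k l n i * (e0\<^sup>2 - \<sigma>\<^sup>2) + cB k l n i * e1 + gg k l n i * (e1\<^sup>2 - \<sigma>\<^sup>2)"
    for i e0 e1
    unfolding cA_def cB_def gg_def by (simp add: power2_eq_square algebra_simps)
  have "((1 / real n) *\<^sub>R AtA fx fy R t p eps n w - (1 / real n) *\<^sub>R BtB fx fy R t p n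
     - \<sigma>\<^sup>2 *\<^sub>R ((1 / real n) *\<^sub>R GtG p n)) $ k $ l
    = (1 / real n) * (\<Sum>i<n. (aU n i $ k + (uoi i + eps i 0 w) * g n i $ k) * (aU n i $ l + (uoi i + eps i 0 w) * g n i $ l)
      + (aV n i $ k + (voi i + eps i 1 w) * g n i $ k) * (aV n i $ l + (voi i + eps i 1 w) * g n i $ l)
      - ((aU n i $ k + uoi i * g n i $ k) * (aU n i $ l + uoi i * g n i $ l)
      + (aV n i $ k + voi i * g n i $ k) * (aV n i $ l + voi i * g n i $ l))
      - \<sigma>\<^sup>2 * (2 * (g n i $ k * g n i $ l)))"
    unfolding AtA_def BtB_def aU_def aV_def g_def uoi_def voi_def
    by (simp add: gram_comp GtG_comp rowU_c rowV_c uobs_def vobs_def sum_subtractf sum_distrib_left right_diff_distrib)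
  also have "\<dots> = (1 / real n) * (\<Sum>i<n. cA k l n i * eps i 0 w + gg k l n i * ((eps i 0 w)\<^sup>2 - \<sigma>\<^sup>2)
      + cB k l n i * eps i 1 w + gg k l n i * ((eps i 1 w)\<^sup>2 - \<sigma>\<^sup>2))"
    using hterm by simp
  finally show ?thesis by (simp add: sum.distrib)
qed

lemma cA_bound:
  assumes AG: "\<forall>n i k. \<bar>g n i $ k\<bar> \<le> G \<and> \<bar>aU n i $ k\<bar> \<le> A \<and> \<bar>aV n i $ k\<bar> \<le> A"
  shows "(cA k l n i)\<^sup>2 \<le> 6 * (A\<^sup>2 * G\<^sup>2) + 12 * G\<^sup>2 * ((rU n i $ k)\<^sup>2 + (rV n i $ k)\<^sup>2)"
proof -
  have x: "(aU n i $ k * g n i $ l)\<^sup>2 \<le> A\<^sup>2 * G\<^sup>2" using AG by (intro sq_prod_le) auto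
  have y: "(g n i $ k * aU n i $ l)\<^sup>2 \<le> A\<^sup>2 * G\<^sup>2" using sq_prod_le[of "g n i $ k" G "aU n i $ l" A] AG
    by (simp add: mult.commute)
  have gl: "(g n i $ l)\<^sup>2 \<le> G\<^sup>2" using AG power_mono[of "\<bar>g n i $ l\<bar>" G 2] by auto
  have z: "(2 * uoi i * (g n i $ k * g n i $ l))\<^sup>2 = 4 * ((uoi i * g n i $ k)\<^sup>2 * (g n i $ l)\<^sup>2)"
    by (simp add: power_mult_distrib)
  have w: "(uoi i * g n i $ k)\<^sup>2 * (g n i $ l)\<^sup>2 \<le> (rU n i $ k)\<^sup>2 * G\<^sup>2"
    using rU_sq gl by (intro mult_mono) auto
  have s3: "(cA k l n i)\<^sup>2 \<le> 3 * ((aU n i $ k * g n i $ l)\<^sup>2 + (g n i $ k * aU n i $ l)\<^sup>2 + (2 * uoi i * (g n i $ k * g n i $ l))\<^sup>2)"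
    unfolding cA_def by (rule sq3_le)
  have "(cA k l n i)\<^sup>2 \<le> 3 * (A\<^sup>2 * G\<^sup>2 + A\<^sup>2 * G\<^sup>2 + 4 * ((rU n i $ k)\<^sup>2 * G\<^sup>2))"
  proof -
    have "3 * ((aU n i $ k * g n i $ l)\<^sup>2 + (g n i $ k * aU n i $ l)\<^sup>2 + 4 * ((uoi i * g n i $ k)\<^sup>2 * (g n i $ l)\<^sup>2))
       \<le> 3 * (A\<^sup>2 * G\<^sup>2 + A\<^sup>2 * G\<^sup>2 + 4 * ((rU n i $ k)\<^sup>2 * G\<^sup>2))"
      using x y w by (intro mult_left_mono add_mono) auto
    then show ?thesis using s3 unfolding z by (rule order.trans[rotated])
  qed
  also have "\<dots> = 6 * (A\<^sup>2 * G\<^sup>2) + 12 * G\<^sup>2 * (rU n i $ k)\<^sup>2" by (simp add: algebra_simps)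
  also have "\<dots> \<le> 6 * (A\<^sup>2 * G\<^sup>2) + 12 * G\<^sup>2 * ((rU n i $ k)\<^sup>2 + (rV n i $ k)\<^sup>2)"
    by (intro add_left_mono mult_left_mono) auto
  finally show ?thesis .
qed

lemma cB_bound:
  assumes AG: "\<forall>n i k. \<bar>g n i $ k\<bar> \<le> G \<and> \<bar>aU n i $ k\<bar> \<le> A \<and> \<bar>aV n i $ k\<bar> \<le> A"
  shows "(cB k l n i)\<^sup>2 \<le> 6 * (A\<^sup>2 * G\<^sup>2) + 12 * G\<^sup>2 * ((rU n i $ k)\<^sup>2 + (rV n i $ k)\<^sup>2)"
proof -
  have x: "(aV n i $ k * g n i $ l)\<^sup>2 \<le> A\<^sup>2 * G\<^sup>2" using AG by (intro sq_prod_le) auto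
  have y: "(g n i $ k * aV n i $ l)\<^sup>2 \<le> A\<^sup>2 * G\<^sup>2" using sq_prod_le[of "g n i $ k" G "aV n i $ l" A] AG
    by (simp add: mult.commute)
  have gl: "(g n i $ l)\<^sup>2 \<le> G\<^sup>2" using AG power_mono[of "\<bar>g n i $ l\<bar>" G 2] by auto
  have z: "(2 * voi i * (g n i $ k * g n i $ l))\<^sup>2 = 4 * ((voi i * g n i $ k)\<^sup>2 * (g n i $ l)\<^sup>2)"
    by (simp add: power_mult_distrib)
  have w: "(voi i * g n i $ k)\<^sup>2 * (g n i $ l)\<^sup>2 \<le> (rV n i $ k)\<^sup>2 * G\<^sup>2"
    using rV_sq gl by (intro mult_mono) auto
  have s3: "(cB k l n i)\<^sup>2 \<le> 3 * ((aV n i $ k * g n i $ l)\<^sup>2 + (g n i $ k * aV n i $ l)\<^sup>2 + (2 * voi i * (g n i $ k * g n i $ l))\<^sup>2)"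
    unfolding cB_def by (rule sq3_le)
  have "(cB k l n i)\<^sup>2 \<le> 3 * (A\<^sup>2 * G\<^sup>2 + A\<^sup>2 * G\<^sup>2 + 4 * ((rV n i $ k)\<^sup>2 * G\<^sup>2))"
  proof -
    have "3 * ((aV n i $ k * g n i $ l)\<^sup>2 + (g n i $ k * aV n i $ l)\<^sup>2 + 4 * ((voi i * g n i $ k)\<^sup>2 * (g n i $ l)\<^sup>2))
       \<le> 3 * (A\<^sup>2 * G\<^sup>2 + A\<^sup>2 * G\<^sup>2 + 4 * ((rV n i $ k)\<^sup>2 * G\<^sup>2))"
      using x y w by (intro mult_left_mono add_mono) auto
    then show ?thesis using s3 unfolding z by (rule order.trans[rotated])
  qed
  also have "\<dots> = 6 * (A\<^sup>2 * G\<^sup>2) + 12 * G\<^sup>2 * (rV n i $ k)\<^sup>2" by (simp add: algebra_simps)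
  also have "\<dots> \<le> 6 * (A\<^sup>2 * G\<^sup>2) + 12 * G\<^sup>2 * ((rU n i $ k)\<^sup>2 + (rV n i $ k)\<^sup>2)"
    by (intro add_left_mono mult_left_mono) auto
  finally show ?thesis .
qed

lemma gg_bound:
  assumes AG: "\<forall>n i k. \<bar>g n i $ k\<bar> \<le> G \<and> \<bar>aU n i $ k\<bar> \<le> A \<and> \<bar>aV n i $ k\<bar> \<le> A"
  shows "(gg k l n i)\<^sup>2 \<le> G\<^sup>2 * G\<^sup>2 + 0 * ((rU n i $ k)\<^sup>2 + (rV n i $ k)\<^sup>2)"
proof -
  have "(gg k l n i)\<^sup>2 \<le> G\<^sup>2 * G\<^sup>2" unfolding gg_def by (rule sq_prod_le) (use AG in auto)
  then show ?thesis by simp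
qed

lemma claim1_sum:
  "Op M (\<lambda>n w. \<Sum>k\<in>UNIV. \<Sum>l\<in>UNIV. \<bar>((1 / real n) *\<^sub>R AtA fx fy R t p eps n w - (1 / real n) *\<^sub>R BtB fx fy R t p n
                             - \<sigma>\<^sup>2 *\<^sub>R ((1 / real n) *\<^sub>R GtG p n)) $ k $ l\<bar>) (\<lambda>n. 1 / sqrt (real n))"
proof -
  obtain A G where AG: "A \<ge> 0" "G \<ge> 0" "\<forall>n i k. \<bar>g n i $ k\<bar> \<le> G \<and> \<bar>aU n i $ k\<bar> \<le> A \<and> \<bar>aV n i $ k\<bar> \<le> A"
    using consts_bound by blast
  obtain T where T: "\<forall>n k. BtB fx fy R t p n $ k $ k \<le> T * real n" using BtB_bound by blast
  define D where "D n w = (1 / real n) *\<^sub>R AtA fx fy R t p eps n w - (1 / real n) *\<^sub>R BtB fx fy R t p n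
                             - \<sigma>\<^sup>2 *\<^sub>R ((1 / real n) *\<^sub>R GtG p n)" for n w
  have ent: "Op M (\<lambda>n w. \<bar>D n w $ k $ l\<bar>) (\<lambda>n. 1 / sqrt (real n))" for k l
  proof (rule Op_mono)
    have c1: "(\<Sum>i<n. (cA k l n i)\<^sup>2) \<le> (6 * (A\<^sup>2 * G\<^sup>2) + 12 * G\<^sup>2 * T) * real n" for n
      by (rule coefB[OF T cA_bound[OF AG(3)]]) simp
    have c2: "(\<Sum>i<n. (cB k l n i)\<^sup>2) \<le> (6 * (A\<^sup>2 * G\<^sup>2) + 12 * G\<^sup>2 * T) * real n" for n
      by (rule coefB[OF T cB_bound[OF AG(3)]]) simp
    have c3: "(\<Sum>i<n. (gg k l n i)\<^sup>2) \<le> (G\<^sup>2 * G\<^sup>2 + 0 * T) * real n" for n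
      by (rule coefB[OF T gg_bound[OF AG(3)]]) simp
    show "Op M (\<lambda>n w. \<bar>\<Sum>i<n. cA k l n i * eps i 0 w\<bar> / real n + \<bar>\<Sum>i<n. gg k l n i * ((eps i 0 w)\<^sup>2 - \<sigma>\<^sup>2)\<bar> / real n
        + \<bar>\<Sum>i<n. cB k l n i * eps i 1 w\<bar> / real n + \<bar>\<Sum>i<n. gg k l n i * ((eps i 1 w)\<^sup>2 - \<sigma>\<^sup>2)\<bar> / real n)
        (\<lambda>n. 1 / sqrt (real n))"
      by (intro Op_add noise1_Op[OF _ c1] noise1_Op[OF _ c2] noise2_Op[OF _ c3]) auto
    show "\<bar>D n w $ k $ l\<bar> \<le> \<bar>\<Sum>i<n. cA k l n i * eps i 0 w\<bar> / real n + \<bar>\<Sum>i<n. gg k l n i * ((eps i 0 w)\<^sup>2 - \<sigma>\<^sup>2)\<bar> / real n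
        + \<bar>\<Sum>i<n. cB k l n i * eps i 1 w\<bar> / real n + \<bar>\<Sum>i<n. gg k l n i * ((eps i 1 w)\<^sup>2 - \<sigma>\<^sup>2)\<bar> / real n"
      for n w unfolding D_def claim1_entry by (rule abs4)
  qed
  have "Op M (\<lambda>n w. \<Sum>k\<in>UNIV. \<Sum>l\<in>UNIV. \<bar>D n w $ k $ l\<bar>) (\<lambda>n. 1 / sqrt (real n))"
    by (intro Op_sum ent) auto
  then show ?thesis unfolding D_def .
qed

lemma claim1:
  "Op M (\<lambda>n w. norm ((1 / real n) *\<^sub>R AtA fx fy R t p eps n w - (1 / real n) *\<^sub>R BtB fx fy R t p n
                             - \<sigma>\<^sup>2 *\<^sub>R ((1 / real n) *\<^sub>R GtG p n))) (\<lambda>n. 1 / sqrt (real n))"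
  using claim1_sum by (rule Op_mono) (rule norm_mat_le)

definition "cU k n i = uoi i * g n i $ k"
definition "cV k n i = voi i * g n i $ k"
definition "gk k n i = g n i $ k"

lemma claim2_entry:
  "((1 / real n) *\<^sub>R Atb fx fy R t p eps n w - (1 / real n) *\<^sub>R Btb fx fy R t p eps n w
     - \<sigma>\<^sup>2 *\<^sub>R ((1 / real n) *\<^sub>R Gt1 p n)) $ k
   = (1 / real n) * ((\<Sum>i<n. cU k n i * eps i 0 w) + (\<Sum>i<n. gk k n i * ((eps i 0 w)\<^sup>2 - \<sigma>\<^sup>2))
       + (\<Sum>i<n. cV k n i * eps i 1 w) + (\<Sum>i<n. gk k n i * ((eps i 1 w)\<^sup>2 - \<sigma>\<^sup>2)))"
proof -
  have hterm: "(uoi i + e0) * (aU n i $ k + (uoi i + e0) * g n i $ k)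
      + (voi i + e1) * (aV n i $ k + (voi i + e1) * g n i $ k)
      - ((uoi i + e0) * (aU n i $ k + uoi i * g n i $ k) + (voi i + e1) * (aV n i $ k + voi i * g n i $ k))
      - \<sigma>\<^sup>2 * (2 * g n i $ k)
      = cU k n i * e0 + gk k n i * (e0\<^sup>2 - \<sigma>\<^sup>2) + cV k n i * e1 + gk k n i * (e1\<^sup>2 - \<sigma>\<^sup>2)"
    for i e0 e1
    unfolding cU_def cV_def gk_def by (simp add: power2_eq_square algebra_simps)
  have "((1 / real n) *\<^sub>R Atb fx fy R t p eps n w - (1 / real n) *\<^sub>R Btb fx fy R t p eps n w
     - \<sigma>\<^sup>2 *\<^sub>R ((1 / real n) *\<^sub>R Gt1 p n)) $ k
    = (1 / real n) * (\<Sum>i<n. (uoi i + eps i 0 w) * (aU n i $ k + (uoi i + eps i 0 w) * g n i $ k)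
      + (voi i + eps i 1 w) * (aV n i $ k + (voi i + eps i 1 w) * g n i $ k)
      - ((uoi i + eps i 0 w) * (aU n i $ k + uoi i * g n i $ k) + (voi i + eps i 1 w) * (aV n i $ k + voi i * g n i $ k))
      - \<sigma>\<^sup>2 * (2 * g n i $ k))"
    unfolding Atb_def Btb_def aU_def aV_def g_def uoi_def voi_def
    by (simp add: cross_comp Gt1_comp rowU_c rowV_c uobs_def vobs_def sum_subtractf sum_distrib_left right_diff_distrib)
  also have "\<dots> = (1 / real n) * (\<Sum>i<n. cU k n i * eps i 0 w + gk k n i * ((eps i 0 w)\<^sup>2 - \<sigma>\<^sup>2)
      + cV k n i * eps i 1 w + gk k n i * ((eps i 1 w)\<^sup>2 - \<sigma>\<^sup>2))"
    using hterm by simp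
  finally show ?thesis by (simp add: sum.distrib)
qed

lemma claim2:
  "Op M (\<lambda>n w. norm ((1 / real n) *\<^sub>R Atb fx fy R t p eps n w - (1 / real n) *\<^sub>R Btb fx fy R t p eps n w
                             - \<sigma>\<^sup>2 *\<^sub>R ((1 / real n) *\<^sub>R Gt1 p n))) (\<lambda>n. 1 / sqrt (real n))"
proof -
  obtain A G where AG: "A \<ge> 0" "G \<ge> 0" "\<forall>n i k. \<bar>g n i $ k\<bar> \<le> G \<and> \<bar>aU n i $ k\<bar> \<le> A \<and> \<bar>aV n i $ k\<bar> \<le> A"
    using consts_bound by blast
  obtain T where T: "\<forall>n k. BtB fx fy R t p n $ k $ k \<le> T * real n" using BtB_bound by blast
  define D where "D n w = (1 / real n) *\<^sub>R Atb fx fy R t p eps n w - (1 / real n) *\<^sub>R Btb fx fy R t p eps n w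
                             - \<sigma>\<^sup>2 *\<^sub>R ((1 / real n) *\<^sub>R Gt1 p n)" for n w
  have ent: "Op M (\<lambda>n w. \<bar>D n w $ k\<bar>) (\<lambda>n. 1 / sqrt (real n))" for k
  proof (rule Op_mono)
    have c1: "(\<Sum>i<n. (cU k n i)\<^sup>2) \<le> (0 + 1 * T) * real n" for n
    proof (rule coefB[OF T, where k=k])
      show "(cU k n i)\<^sup>2 \<le> 0 + 1 * ((rU n i $ k)\<^sup>2 + (rV n i $ k)\<^sup>2)" for n i
        using add_increasing2[OF zero_le_power2[of "rV n i $ k"] rU_sq[of i n k]] unfolding cU_def by simp
    qed simp
    have c2: "(\<Sum>i<n. (cV k n i)\<^sup>2) \<le> (0 + 1 * T) * real n" for n
    proof (rule coefB[OF T, where k=k])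
      show "(cV k n i)\<^sup>2 \<le> 0 + 1 * ((rU n i $ k)\<^sup>2 + (rV n i $ k)\<^sup>2)" for n i
        using add_increasing[OF zero_le_power2[of "rU n i $ k"] rV_sq[of i n k]] unfolding cV_def by simp
    qed simp
    have gsq: "(gk k n i)\<^sup>2 \<le> G\<^sup>2 + 0 * ((rU n i $ k)\<^sup>2 + (rV n i $ k)\<^sup>2)" for n i
      using AG(3) power_mono[of "\<bar>g n i $ k\<bar>" G 2] by (auto simp: gk_def)
    have c3: "(\<Sum>i<n. (gk k n i)\<^sup>2) \<le> (G\<^sup>2 + 0 * T) * real n" for n
      by (rule coefB[OF T gsq]) simp
    show "Op M (\<lambda>n w. \<bar>\<Sum>i<n. cU k n i * eps i 0 w\<bar> / real n + \<bar>\<Sum>i<n. gk k n i * ((eps i 0 w)\<^sup>2 - \<sigma>\<^sup>2)\<bar> / real n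
        + \<bar>\<Sum>i<n. cV k n i * eps i 1 w\<bar> / real n + \<bar>\<Sum>i<n. gk k n i * ((eps i 1 w)\<^sup>2 - \<sigma>\<^sup>2)\<bar> / real n)
        (\<lambda>n. 1 / sqrt (real n))"
      by (intro Op_add noise1_Op[OF _ c1] noise1_Op[OF _ c2] noise2_Op[OF _ c3]) auto
    show "\<bar>D n w $ k\<bar> \<le> \<bar>\<Sum>i<n. cU k n i * eps i 0 w\<bar> / real n + \<bar>\<Sum>i<n. gk k n i * ((eps i 0 w)\<^sup>2 - \<sigma>\<^sup>2)\<bar> / real n
        + \<bar>\<Sum>i<n. cV k n i * eps i 1 w\<bar> / real n + \<bar>\<Sum>i<n. gk k n i * ((eps i 1 w)\<^sup>2 - \<sigma>\<^sup>2)\<bar> / real n"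
      for n w unfolding D_def claim2_entry by (rule abs4)
  qed
  have "Op M (\<lambda>n w. \<Sum>k\<in>UNIV. \<bar>D n w $ k\<bar>) (\<lambda>n. 1 / sqrt (real n))"
    by (intro Op_sum ent) auto
  then have "Op M (\<lambda>n w. norm (D n w)) (\<lambda>n. 1 / sqrt (real n))"
    by (rule Op_mono) (rule norm_le_l1_cart)
  then show ?thesis unfolding D_def .
qed

end


definition m1 :: "real^'n^'m \<Rightarrow> real" where "m1 A = (\<Sum>i\<in>UNIV. \<Sum>j\<in>UNIV. \<bar>A $ i $ j\<bar>)"

lemma matvec_le: "norm (A *v x) \<le> m1 A * norm x"
proof -
  have "norm (A *v x) \<le> (\<Sum>i\<in>UNIV. \<bar>(A *v x) $ i\<bar>)"
    by (rule norm_le_l1_cart)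
  also have "\<dots> \<le> (\<Sum>i\<in>UNIV. \<Sum>j\<in>UNIV. \<bar>A $ i $ j\<bar> * norm x)"
  proof (rule sum_mono)
    fix i
    have "\<bar>(A *v x) $ i\<bar> \<le> \<bar>\<Sum>j\<in>UNIV. A $ i $ j * x $ j\<bar>"
      by (simp add: matrix_vector_mult_def)
    also have "\<dots> \<le> (\<Sum>j\<in>UNIV. \<bar>A $ i $ j * x $ j\<bar>)"
      by (rule sum_abs)
    also have "\<dots> \<le> (\<Sum>j\<in>UNIV. \<bar>A $ i $ j\<bar> * norm x)"
      by (rule sum_mono) (simp add: abs_mult component_le_norm_cart mult_left_mono)
    finally show "\<bar>(A *v x) $ i\<bar> \<le> (\<Sum>j\<in>UNIV. \<bar>A $ i $ j\<bar> * norm x)" .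
  qed
  finally show ?thesis by (simp add: m1_def sum_distrib_right)
qed

lemma m1_nonneg: "m1 A \<ge> 0" unfolding m1_def by (intro sum_nonneg) auto

lemma m1_add: "m1 (A + B) \<le> m1 A + m1 B"
  unfolding m1_def by (simp add: sum.distrib[symmetric] sum_mono abs_triangle_ineq)

lemma m1_scale: "m1 (c *\<^sub>R A) = \<bar>c\<bar> * m1 A"
  unfolding m1_def by (simp add: abs_mult sum_distrib_left)

lemma m1_le_norm: "m1 (A::real^'n^'m) \<le> real CARD('m) * real CARD('n) * norm A"
proof -
  have "m1 A \<le> (\<Sum>i\<in>(UNIV::'m set). \<Sum>j\<in>(UNIV::'n set). norm A)"
    unfolding m1_def by (intro sum_mono mat_comp_le)
  then show ?thesis by simp
qed

lemma matrix_inv_props: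
  fixes A :: "real^'n^'n"
  assumes "invertible A"
  shows "A ** matrix_inv A = mat 1" "matrix_inv A ** A = mat 1"
proof -
  have ex: "\<exists>A'. A ** A' = mat 1 \<and> A' ** A = mat 1" using assms unfolding invertible_def by blast
  show "A ** matrix_inv A = mat 1" "matrix_inv A ** A = mat 1"
    unfolding matrix_inv_def using someI_ex[OF ex] by auto
qed

lemma lower_invertible:
  fixes A :: "real^'n^'n"
  assumes c: "c > 0" and low: "\<And>x. norm (A *v x) \<ge> c * norm x"
  shows "invertible A" "A *v (matrix_inv A *v y) = y"
proof -
  have "inj ((*v) A)"
  proof (rule injI)
    fix x y assume "A *v x = A *v y"
    then have "A *v (x - y) = 0" by (simp add: matrix_vector_mult_diff_distrib)
    then have "c * norm (x - y) \<le> 0" using low[of "x - y"] by simp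
    then show "x = y" using c by (simp add: mult_le_0_iff)
  qed
  then show inv: "invertible A"
    using matrix_left_invertible_injective invertible_left_inverse by blast
  show "A *v (matrix_inv A *v y) = y"
    by (simp add: matrix_vector_mul_assoc matrix_inv_props(1)[OF inv])
qed

lemma solve_bound:
  fixes A :: "real^'n^'n"
  assumes c: "c > 0" and low: "\<And>x. norm (A *v x) \<ge> c * norm x" and eq: "A *v x = y"
  shows "norm x \<le> norm y / c"
  using low[of x] eq c by (simp add: le_divide_eq mult.commute)

lemma perturb_lower:
  fixes A X :: "real^'n^'n"
  assumes low: "\<And>x. norm (A *v x) \<ge> c * norm x" and d: "m1 (X - A) \<le> c / 2"
  shows "norm (X *v x) \<ge> (c / 2) * norm x"
proof -
  have "X *v x = A *v x + (X - A) *v x" by (simp add: matrix_vector_mult_diff_rdistrib)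
  then have "norm (X *v x) \<ge> norm (A *v x) - norm ((X - A) *v x)"
    by (metis norm_diff_ineq add_diff_cancel_left')
  moreover have "norm ((X - A) *v x) \<le> (c / 2) * norm x"
    using matvec_le[of "X - A" x] d by (meson mult_right_mono norm_ge_zero order_trans)
  ultimately show ?thesis using low[of x] by linarith
qed



context cam begin

lemma depth_eq: "depth R t q = q \<bullet> R $ 3 + t $ 3"
  unfolding depth_def by (simp add: matrix_vector_mul_component inner_commute)

lemma uo_eq: "fx * (p i \<bullet> R $ 1) + fx * t $ 1 = uoi i * depth R t (p i)"
proof -
  have d: "depth R t (p i) \<noteq> 0" using front[of i] by simp
  show ?thesis unfolding uoi_def uo_def using d
    by (simp add: matrix_vector_mul_component inner_commute field_simps)
qed

lemma vo_eq: "fy * (p i \<bullet> R $ 2) + fy * t $ 2 = voi i * depth R t (p i)"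
proof -
  have d: "depth R t (p i) \<noteq> 0" using front[of i] by simp
  show ?thesis unfolding voi_def vo_def using d
    by (simp add: matrix_vector_mul_component inner_commute field_simps)
qed

lemma alpha_eq:
  assumes n: "n > 0"
  shows "alpha R t p n * (pbar p n \<bullet> R $ 3 + t $ 3) = 1"
proof -
  have S: "(\<Sum>i<n. depth R t (p i)) > 0" using n front by (intro sum_pos) auto
  have "pbar p n \<bullet> R $ 3 + t $ 3 = (\<Sum>i<n. depth R t (p i)) / real n"
    unfolding pbar_def depth_eq using n
    by (simp add: inner_sum_left sum.distrib field_simps)
  then show ?thesis unfolding alpha_def using S n by simp
qed

definition "vth = vec11 (v3list (R$3) @ v3list (R$1) @ [t$1] @ v3list (R$2) @ [t$2])"

lemma theta_o_eq: "theta_o R t p n = alpha R t p n *\<^sub>R vth"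
  unfolding theta_o_def vth_def ..

lemma rU_theta:
  assumes n: "n > 0"
  shows "rU n i \<bullet> theta_o R t p n = uoi i"
proof -
  have "rU n i \<bullet> vth = - uoi i * ((p i - pbar p n) \<bullet> R $ 3) + fx * (p i \<bullet> R $ 1) + fx * t $ 1"
    unfolding rU_def vth_def by (rule rowU_theta)
  also have "\<dots> = - uoi i * ((p i - pbar p n) \<bullet> R $ 3) + (fx * (p i \<bullet> R $ 1) + fx * t $ 1)"
    by (simp add: algebra_simps)
  also have "\<dots> = - uoi i * ((p i - pbar p n) \<bullet> R $ 3) + uoi i * (p i \<bullet> R $ 3 + t $ 3)"
    unfolding uo_eq depth_eq ..
  also have "\<dots> = uoi i * (pbar p n \<bullet> R $ 3 + t $ 3)"
    by (simp add: inner_diff_left algebra_simps)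
  finally have "rU n i \<bullet> vth = uoi i * (pbar p n \<bullet> R $ 3 + t $ 3)" .
  then have "alpha R t p n * (rU n i \<bullet> vth) = uoi i * (alpha R t p n * (pbar p n \<bullet> R $ 3 + t $ 3))"
    by simp
  then show ?thesis
    unfolding theta_o_eq inner_scaleR_right alpha_eq[OF n] by simp
qed

lemma rV_theta:
  assumes n: "n > 0"
  shows "rV n i \<bullet> theta_o R t p n = voi i"
proof -
  have "rV n i \<bullet> vth = - voi i * ((p i - pbar p n) \<bullet> R $ 3) + fy * (p i \<bullet> R $ 2) + fy * t $ 2"
    unfolding rV_def vth_def by (rule rowV_theta)
  also have "\<dots> = - voi i * ((p i - pbar p n) \<bullet> R $ 3) + (fy * (p i \<bullet> R $ 2) + fy * t $ 2)"
    by (simp add: algebra_simps)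
  also have "\<dots> = - voi i * ((p i - pbar p n) \<bullet> R $ 3) + voi i * (p i \<bullet> R $ 3 + t $ 3)"
    unfolding vo_eq depth_eq ..
  also have "\<dots> = voi i * (pbar p n \<bullet> R $ 3 + t $ 3)"
    by (simp add: inner_diff_left algebra_simps)
  finally have "rV n i \<bullet> vth = voi i * (pbar p n \<bullet> R $ 3 + t $ 3)" .
  then have "alpha R t p n * (rV n i \<bullet> vth) = voi i * (alpha R t p n * (pbar p n \<bullet> R $ 3 + t $ 3))"
    by simp
  then show ?thesis
    unfolding theta_o_eq inner_scaleR_right alpha_eq[OF n] by simp
qed

lemma outer_mv: "outer11 a *v x = (a \<bullet> x) *\<^sub>R a"
  unfolding outer11_def by (simp add: vec_eq_iff matrix_vector_mult_def inner_vec_def sum_distrib_left mult.commute mult.left_commute)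

lemma BtB_eq: "BtB fx fy R t p n = (\<Sum>i<n. outer11 (rU n i) + outer11 (rV n i))"
  unfolding BtB_def gram_def rU_def rV_def uoi_def voi_def ..

lemma sum_mv: "(\<Sum>i\<in>I. A i) *v x = (\<Sum>i\<in>I. A i *v x)" for A :: "nat \<Rightarrow> real^11^11"
  by (induction I rule: infinite_finite_induct) (auto simp: matrix_vector_mult_add_rdistrib)

lemma BtB_theta:
  assumes n: "n > 0"
  shows "BtB fx fy R t p n *v theta_o R t p n = (\<Sum>i<n. uoi i *\<^sub>R rU n i + voi i *\<^sub>R rV n i)"
  unfolding BtB_eq sum_mv matrix_vector_mult_add_rdistrib outer_mv rU_theta[OF n] rV_theta[OF n] ..

lemma Btb_eq: "Btb fx fy R t p eps n w = (\<Sum>i<n. (uoi i + eps i 0 w) *\<^sub>R rU n i + (voi i + eps i 1 w) *\<^sub>R rV n i)"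
  unfolding Btb_def cross_def rU_def rV_def uoi_def voi_def uobs_def vobs_def ..

definition "Nn n w = (1 / real n) *\<^sub>R (\<Sum>i<n. eps i 0 w *\<^sub>R rU n i + eps i 1 w *\<^sub>R rV n i)"

lemma N_eq:
  assumes n: "n > 0"
  shows "(1 / real n) *\<^sub>R Btb fx fy R t p eps n w - ((1 / real n) *\<^sub>R BtB fx fy R t p n) *v theta_o R t p n = Nn n w"
proof -
  have "((1 / real n) *\<^sub>R BtB fx fy R t p n) *v theta_o R t p n = (1 / real n) *\<^sub>R (BtB fx fy R t p n *v theta_o R t p n)"
    by (simp add: scaleR_matrix_vector_assoc)
  then show ?thesis
    unfolding Nn_def Btb_eq BtB_theta[OF n]
    by (simp add: scaleR_diff_right[symmetric] sum_subtractf[symmetric] algebra_simps)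
qed

lemma N_Op: "Op M (\<lambda>n w. norm (Nn n w)) (\<lambda>n. 1 / sqrt (real n))"
proof -
  obtain T where T: "\<forall>n k. BtB fx fy R t p n $ k $ k \<le> T * real n" using BtB_bound by blast
  have ent: "Op M (\<lambda>n w. \<bar>Nn n w $ k\<bar>) (\<lambda>n. 1 / sqrt (real n))" for k
  proof (rule Op_mono)
    have c1: "(\<Sum>i<n. (rU n i $ k)\<^sup>2) \<le> (0 + 1 * T) * real n" for n
    proof (rule coefB[OF T, where k=k])
      show "(rU n i $ k)\<^sup>2 \<le> 0 + 1 * ((rU n i $ k)\<^sup>2 + (rV n i $ k)\<^sup>2)" for n i by simp
    qed simp
    have c2: "(\<Sum>i<n. (rV n i $ k)\<^sup>2) \<le> (0 + 1 * T) * real n" for n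
    proof (rule coefB[OF T, where k=k])
      show "(rV n i $ k)\<^sup>2 \<le> 0 + 1 * ((rU n i $ k)\<^sup>2 + (rV n i $ k)\<^sup>2)" for n i by simp
    qed simp
    show "Op M (\<lambda>n w. \<bar>\<Sum>i<n. rU n i $ k * eps i 0 w\<bar> / real n + \<bar>\<Sum>i<n. rV n i $ k * eps i 1 w\<bar> / real n)
        (\<lambda>n. 1 / sqrt (real n))"
      by (intro Op_add noise1_Op[OF _ c1] noise1_Op[OF _ c2]) auto
    show "\<bar>Nn n w $ k\<bar> \<le> \<bar>\<Sum>i<n. rU n i $ k * eps i 0 w\<bar> / real n + \<bar>\<Sum>i<n. rV n i $ k * eps i 1 w\<bar> / real n" for n w
    proof -
      have "Nn n w $ k = (1 / real n) * ((\<Sum>i<n. rU n i $ k * eps i 0 w) + (\<Sum>i<n. rV n i $ k * eps i 1 w))"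
        unfolding Nn_def by (simp add: sum.distrib mult.commute)
      then show ?thesis by (simp add: abs_mult add_divide_distrib[symmetric] divide_right_mono abs_triangle_ineq)
    qed
  qed
  have "Op M (\<lambda>n w. \<Sum>k\<in>UNIV. \<bar>Nn n w $ k\<bar>) (\<lambda>n. 1 / sqrt (real n))"
    by (intro Op_sum ent) auto
  then show ?thesis by (rule Op_mono) (rule norm_le_l1_cart)
qed

end


lemma rowU_w0: "rowU fx pb q u \<bullet> vec11 ([0,0,0] @ v3list r @ [s] @ [0,0,0,0]) = fx * (q \<bullet> r) + fx * s"
  unfolding rowU_def inner_vec11 sum_lt11 by (simp add: v3list_def inner3 algebra_simps)

lemma rowV_w0: "rowV fy pb q v \<bullet> vec11 ([0,0,0] @ v3list r @ [s] @ [0,0,0,0]) = 0"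
  unfolding rowV_def inner_vec11 sum_lt11 by (simp add: v3list_def)

lemma norm_sq_cart: "(norm (x::real^'n))\<^sup>2 = (\<Sum>k\<in>UNIV. (x $ k)\<^sup>2)"
  unfolding power2_norm_eq_inner inner_vec_def by (simp add: power2_eq_square)

context cam begin

lemma lower_Ln: "\<exists>c N0. c > 0 \<and> (\<forall>n\<ge>N0. \<forall>x. norm (((1 / real n) *\<^sub>R BtB fx fy R t p n) *v x) \<ge> c * norm x)"
proof -
  obtain L where L: "(\<lambda>n. (1 / real n) *\<^sub>R BtB fx fy R t p n) \<longlonglongrightarrow> L" "invertible L"
    using BtB_conv by blast
  define Li where "Li = matrix_inv L"
  define c0 where "c0 = 1 / (m1 Li + 1)"
  have c0: "c0 > 0" unfolding c0_def using m1_nonneg[of Li] by simp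
  have lowL: "norm (L *v x) \<ge> c0 * norm x" for x
  proof -
    have "x = Li *v (L *v x)"
      unfolding Li_def by (simp add: matrix_vector_mul_assoc matrix_inv_props(2)[OF L(2)])
    then have "norm x \<le> m1 Li * norm (L *v x)" by (metis matvec_le)
    also have "\<dots> \<le> (m1 Li + 1) * norm (L *v x)" by (simp add: mult_right_mono)
    finally show ?thesis unfolding c0_def using m1_nonneg[of Li]
      by (simp add: divide_le_eq mult.commute)
  qed
  obtain N0 where N0: "\<forall>n\<ge>N0. norm ((1 / real n) *\<^sub>R BtB fx fy R t p n - L) < c0 / 2 / 121"
    using L(1) c0 unfolding LIMSEQ_iff by (metis divide_pos_pos zero_less_numeral)
  have "\<forall>n\<ge>N0. \<forall>x. norm (((1 / real n) *\<^sub>R BtB fx fy R t p n) *v x) \<ge> (c0 / 2) * norm x"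
  proof (intro allI impI)
    fix n x assume n: "n \<ge> N0"
    have "m1 ((1 / real n) *\<^sub>R BtB fx fy R t p n - L) \<le> 11 * 11 * norm ((1 / real n) *\<^sub>R BtB fx fy R t p n - L)"
      using m1_le_norm[of "(1 / real n) *\<^sub>R BtB fx fy R t p n - L"] by simp
    also have "\<dots> \<le> c0 / 2" using N0 n by auto
    finally show "norm (((1 / real n) *\<^sub>R BtB fx fy R t p n) *v x) \<ge> (c0 / 2) * norm x"
      by (intro perturb_lower[OF lowL])
  qed
  then show ?thesis using c0 by (intro exI[of _ "c0 / 2"] exI[of _ N0]) auto
qed

lemma R3_norm: "norm (R $ 3) = 1"
proof -
  have "row 3 R = R $ 3" by (simp add: row_def vec_eq_iff)
  then show ?thesis using rot(1) unfolding orthogonal_matrix_orthonormal_rows by metis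
qed

definition "w0 = vec11 ([0,0,0] @ v3list (R $ 3) @ [t $ 3] @ [0,0,0,0])"

lemma w0_nz: "norm w0 > 0"
proof (rule ccontr)
  assume "\<not> norm w0 > 0"
  then have z: "w0 = 0" by simp
  have a: "rowU fx 0 (R $ 3) 0 \<bullet> w0 = fx * (R $ 3 \<bullet> R $ 3) + fx * t $ 3" unfolding w0_def by (rule rowU_w0)
  have b: "rowU fx 0 0 0 \<bullet> w0 = fx * (0 \<bullet> R $ 3) + fx * t $ 3" unfolding w0_def by (rule rowU_w0)
  have "R $ 3 \<bullet> R $ 3 = 1" using R3_norm by (simp add: power2_norm_eq_inner[symmetric])
  then show False using a b z f(1) by simp
qed

lemma rU_w0: "rU n i \<bullet> w0 = fx * depth R t (p i)"
  unfolding rU_def w0_def rowU_w0 depth_eq by (simp add: algebra_simps)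

lemma rV_w0: "rV n i \<bullet> w0 = 0"
  unfolding rV_def w0_def by (rule rowV_w0)

lemma Lw0_comp: "(((1 / real n) *\<^sub>R BtB fx fy R t p n) *v w0) $ k = (1 / real n) * (\<Sum>i<n. rU n i $ k * (fx * depth R t (p i)))"
proof -
  have "BtB fx fy R t p n *v w0 = (\<Sum>i<n. (fx * depth R t (p i)) *\<^sub>R rU n i)"
    unfolding BtB_eq sum_mv matrix_vector_mult_add_rdistrib outer_mv rU_w0 rV_w0 by simp
  moreover have "((1 / real n) *\<^sub>R BtB fx fy R t p n) *v w0 = (1 / real n) *\<^sub>R (BtB fx fy R t p n *v w0)"
    by (simp add: scaleR_matrix_vector_assoc)
  ultimately show ?thesis by (simp add: mult.commute sum_divide_distrib)
qed

lemma theta_bound: "\<exists>\<Theta> N1. \<forall>n\<ge>N1. norm (theta_o R t p n) \<le> \<Theta>"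
proof -
  obtain c N0 where c: "c > 0" "\<forall>n\<ge>N0. \<forall>x. norm (((1 / real n) *\<^sub>R BtB fx fy R t p n) *v x) \<ge> c * norm x"
    using lower_Ln by blast
  obtain T where T: "\<forall>n k. BtB fx fy R t p n $ k $ k \<le> T * real n" using BtB_bound by blast
  define T' where "T' = max T 1"
  have T': "BtB fx fy R t p n $ k $ k \<le> T' * real n" "T' > 0" for n k
  proof -
    have "T * real n \<le> T' * real n" unfolding T'_def by (intro mult_right_mono) auto
    then show "BtB fx fy R t p n $ k $ k \<le> T' * real n" using T by (meson order.trans)
    show "T' > 0" unfolding T'_def by simp
  qed
  obtain Pb where Pb: "Pb \<ge> 0" "\<forall>i. norm (p i) \<le> Pb" using P_bound by blast
  define Dm where "Dm = Pb + \<bar>t $ 3\<bar>"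
  have dle: "depth R t (p i) \<le> Dm" for i
  proof -
    have "p i \<bullet> R $ 3 \<le> norm (p i) * norm (R $ 3)" by (rule norm_cauchy_schwarz)
    then show ?thesis unfolding depth_eq Dm_def using R3_norm Pb(2)[rule_format, of i] by simp
  qed
  have Dm: "Dm > 0" using dle[of 0] front[of 0] by simp
  define \<kappa> where "\<kappa> = c\<^sup>2 * (norm w0)\<^sup>2 / (11 * T' * fx\<^sup>2)"
  have \<kappa>: "\<kappa> > 0" unfolding \<kappa>_def using c(1) w0_nz T'(2) f(1) by simp
  have "norm (theta_o R t p n) \<le> Dm / \<kappa> * norm vth" if n: "n \<ge> max N0 1" for n
  proof -
    have n0: "real n > 0" using n by simp
    let ?S = "\<Sum>i<n. (depth R t (p i))\<^sup>2"
    have comp: "((((1 / real n) *\<^sub>R BtB fx fy R t p n) *v w0) $ k)\<^sup>2 \<le> T' * fx\<^sup>2 * ?S / real n" for k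
    proof -
      have "((((1 / real n) *\<^sub>R BtB fx fy R t p n) *v w0) $ k)\<^sup>2
          = (\<Sum>i<n. rU n i $ k * (fx * depth R t (p i)))\<^sup>2 / (real n)\<^sup>2"
        unfolding Lw0_comp by (simp add: power_divide)
      also have "\<dots> \<le> ((\<Sum>i<n. (rU n i $ k)\<^sup>2) * (\<Sum>i<n. (fx * depth R t (p i))\<^sup>2)) / (real n)\<^sup>2"
        by (intro divide_right_mono Cauchy_Schwarz_ineq_sum) simp
      also have "\<dots> \<le> ((T' * real n) * (fx\<^sup>2 * ?S)) / (real n)\<^sup>2"
      proof (intro divide_right_mono mult_mono)
        show "(\<Sum>i<n. (rU n i $ k)\<^sup>2) \<le> T' * real n"
          using T'(1)[of n k] unfolding BtB_diag
          by (meson order.trans sum_mono le_add_same_cancel1 zero_le_power2)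
        show "(\<Sum>i<n. (fx * depth R t (p i))\<^sup>2) \<le> fx\<^sup>2 * ?S"
          by (simp add: power_mult_distrib sum_distrib_left)
      qed (use T'(2) in \<open>auto intro: sum_nonneg mult_nonneg_nonneg less_imp_le\<close>)
      also have "\<dots> = T' * fx\<^sup>2 * ?S / real n" using n0 by (simp add: power2_eq_square field_simps)
      finally show ?thesis .
    qed
    have "(c * norm w0)\<^sup>2 \<le> (norm (((1 / real n) *\<^sub>R BtB fx fy R t p n) *v w0))\<^sup>2"
      using c n w0_nz by (intro power_mono) auto
    also have "\<dots> = (\<Sum>k\<in>UNIV. ((((1 / real n) *\<^sub>R BtB fx fy R t p n) *v w0) $ k)\<^sup>2)" by (rule norm_sq_cart)
    also have "\<dots> \<le> (\<Sum>k\<in>(UNIV::11 set). T' * fx\<^sup>2 * ?S / real n)" by (intro sum_mono comp)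
    also have "\<dots> = 11 * T' * fx\<^sup>2 * ?S / real n" by simp
    finally have "(c * norm w0)\<^sup>2 \<le> 11 * T' * fx\<^sup>2 * ?S / real n" .
    then have S1: "real n * \<kappa> \<le> ?S"
      unfolding \<kappa>_def using n0 T'(2) f(1) by (simp add: field_simps power_mult_distrib)
    have "?S \<le> (\<Sum>i<n. Dm * depth R t (p i))"
      using dle front by (intro sum_mono) (simp add: power2_eq_square mult_right_mono less_imp_le)
    also have "\<dots> = Dm * (\<Sum>i<n. depth R t (p i))" by (simp add: sum_distrib_left)
    finally have S2: "real n * \<kappa> \<le> Dm * (\<Sum>i<n. depth R t (p i))" using S1 by linarith
    have Spos: "(\<Sum>i<n. depth R t (p i)) > 0" using n0 front by (intro sum_pos) auto
    have al: "alpha R t p n \<le> Dm / \<kappa>"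
      unfolding alpha_def using S2 Spos \<kappa> Dm by (simp add: field_simps)
    have al0: "alpha R t p n \<ge> 0" unfolding alpha_def using Spos by simp
    have "alpha R t p n * norm vth \<le> Dm / \<kappa> * norm vth" using al norm_ge_zero by (rule mult_right_mono)
    then show ?thesis unfolding theta_o_eq using al0 by simp
  qed
  then show ?thesis by blast
qed

end


lemma scale_solve:
  fixes A :: "real^'n^'n"
  assumes c: "c > 0" and r: "r > 0" and low: "\<And>x. norm (A *v x) \<ge> c * norm x"
  shows "A *v (matrix_inv (r *\<^sub>R A) *v y) = (1 / r) *\<^sub>R y"
proof -
  have low2: "norm ((r *\<^sub>R A) *v x) \<ge> (r * c) * norm x" for x
  proof -
    have "(r *\<^sub>R A) *v x = r *\<^sub>R (A *v x)" by (simp add: scaleR_matrix_vector_assoc)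
    then show ?thesis using low[of x] r by (simp add: mult.assoc mult_left_mono)
  qed
  have "(r *\<^sub>R A) *v (matrix_inv (r *\<^sub>R A) *v y) = y"
    by (rule lower_invertible(2)[OF _ low2]) (use c r in simp)
  then have "r *\<^sub>R (A *v (matrix_inv (r *\<^sub>R A) *v y)) = y" by (simp add: scaleR_matrix_vector_assoc)
  then show ?thesis using r by (metis divideR_right mult_eq_0_iff real_scaleR_def scaleR_one
        less_irrefl scaleR_scaleR nonzero_divide_eq_eq)
qed

context cam begin

lemma Gt_bounds: "\<exists>Gb. Gb \<ge> 0 \<and> (\<forall>n. m1 ((1 / real n) *\<^sub>R GtG p n) \<le> Gb \<and> norm ((1 / real n) *\<^sub>R Gt1 p n) \<le> Gb)"
proof -
  obtain A G where AG: "A \<ge> 0" "G \<ge> 0" "\<forall>n i k. \<bar>g n i $ k\<bar> \<le> G \<and> \<bar>aU n i $ k\<bar> \<le> A \<and> \<bar>aV n i $ k\<bar> \<le> A"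
    using consts_bound by blast
  have e1: "\<bar>((1 / real n) *\<^sub>R GtG p n) $ k $ l\<bar> \<le> 2 * G\<^sup>2" for n k l
  proof (cases "n = 0")
    case True then show ?thesis by simp
  next
    case False
    have "\<bar>GtG p n $ k $ l\<bar> \<le> (\<Sum>i<n. \<bar>2 * (g n i $ k * g n i $ l)\<bar>)"
      unfolding GtG_comp g_def by (rule sum_abs)
    also have "\<dots> \<le> (\<Sum>i<n. 2 * G\<^sup>2)"
    proof (rule sum_mono)
      fix i
      have "\<bar>g n i $ k\<bar> * \<bar>g n i $ l\<bar> \<le> G * G" using AG by (intro mult_mono) auto
      then show "\<bar>2 * (g n i $ k * g n i $ l)\<bar> \<le> 2 * G\<^sup>2" by (simp add: abs_mult power2_eq_square)
    qed
    finally show ?thesis using False by (simp add: divide_le_eq mult.commute)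
  qed
  have e2: "\<bar>((1 / real n) *\<^sub>R Gt1 p n) $ k\<bar> \<le> 2 * G" for n k
  proof (cases "n = 0")
    case True then show ?thesis using AG by simp
  next
    case False
    have "\<bar>Gt1 p n $ k\<bar> \<le> (\<Sum>i<n. \<bar>2 * g n i $ k\<bar>)"
      unfolding Gt1_comp g_def by (rule sum_abs)
    also have "\<dots> \<le> (\<Sum>i<n. 2 * G)" using AG by (intro sum_mono) (simp add: abs_mult)
    finally show ?thesis using False by (simp add: divide_le_eq mult.commute)
  qed
  have "m1 ((1 / real n) *\<^sub>R GtG p n) \<le> 121 * (2 * G\<^sup>2)" for n
  proof -
    have "m1 ((1 / real n) *\<^sub>R GtG p n) \<le> (\<Sum>k\<in>(UNIV::11 set). \<Sum>l\<in>(UNIV::11 set). 2 * G\<^sup>2)"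
      unfolding m1_def by (intro sum_mono e1)
    then show ?thesis by simp
  qed
  moreover have "norm ((1 / real n) *\<^sub>R Gt1 p n) \<le> 11 * (2 * G)" for n
  proof -
    have "norm ((1 / real n) *\<^sub>R Gt1 p n) \<le> (\<Sum>k\<in>(UNIV::11 set). 2 * G)"
      by (rule order.trans[OF norm_le_l1_cart]) (intro sum_mono e2)
    then show ?thesis by simp
  qed
  ultimately show ?thesis using AG
    by (intro exI[of _ "121 * (2 * G\<^sup>2) + 11 * (2 * G)"]) (auto intro: order.trans add_increasing2 add_increasing)
qed

lemma claims34:
  "Op M (\<lambda>n w. norm (thetaBE fx fy R t p eps s2 n w - thetaUB fx fy R t p eps n w)) (\<lambda>n. 1 / sqrt (real n))
   \<and> Op M (\<lambda>n w. norm (thetaBE fx fy R t p eps s2 n w - theta_o R t p n)) (\<lambda>n. 1 / sqrt (real n))"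
proof -
  obtain c N0 where c: "c > 0" "\<forall>n\<ge>N0. \<forall>x. norm (((1 / real n) *\<^sub>R BtB fx fy R t p n) *v x) \<ge> c * norm x"
    using lower_Ln by blast
  obtain \<Theta>0 N1 where Th0: "\<forall>n\<ge>N1. norm (theta_o R t p n) \<le> \<Theta>0" using theta_bound by blast
  define \<Theta> where "\<Theta> = max \<Theta>0 0"
  have Th: "\<forall>n\<ge>N1. norm (theta_o R t p n) \<le> \<Theta>" "\<Theta> \<ge> 0" using Th0 unfolding \<Theta>_def by (auto intro: order.trans)
  obtain Gb where Gb: "Gb \<ge> 0" "\<forall>n. m1 ((1 / real n) *\<^sub>R GtG p n) \<le> Gb \<and> norm ((1 / real n) *\<^sub>R Gt1 p n) \<le> Gb"
    using Gt_bounds by blast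
  define L where "L n = (1 / real n) *\<^sub>R BtB fx fy R t p n" for n
  define D1 where "D1 n w = (1 / real n) *\<^sub>R AtA fx fy R t p eps n w - (1 / real n) *\<^sub>R BtB fx fy R t p n
                             - \<sigma>\<^sup>2 *\<^sub>R ((1 / real n) *\<^sub>R GtG p n)" for n w
  define D2 where "D2 n w = (1 / real n) *\<^sub>R Atb fx fy R t p eps n w - (1 / real n) *\<^sub>R Btb fx fy R t p eps n w
                             - \<sigma>\<^sup>2 *\<^sub>R ((1 / real n) *\<^sub>R Gt1 p n)" for n w
  define ds where "ds n w = \<bar>s2 n w - \<sigma>\<^sup>2\<bar>" for n w
  define \<Delta> where "\<Delta> n w = m1 (D1 n w) + ds n w * Gb" for n w
  define E where "E n w = norm (D2 n w) + ds n w * Gb" for n w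
  define RHS3 where "RHS3 n w = (2 / c) * (E n w + \<Delta> n w * \<Theta> + (1 / c) * (\<Delta> n w * norm (Nn n w)))" for n w
  define RHS4 where "RHS4 n w = RHS3 n w + (1 / c) * norm (Nn n w)" for n w
  let ?r = "\<lambda>n. 1 / sqrt (real n)"
  have r0: "?r n \<ge> 0" for n by simp
  have ds_Op: "Op M ds ?r" unfolding ds_def by (rule Op_rate_conv[OF s2_rate])
  have dsGb: "Op M (\<lambda>n w. Gb * ds n w) ?r" by (rule Op_cmult[OF ds_Op r0 Gb(1)]) (simp add: ds_def)
  have D1_Op: "Op M (\<lambda>n w. m1 (D1 n w)) ?r" using claim1_sum unfolding D1_def m1_def .
  have D2_Op: "Op M (\<lambda>n w. norm (D2 n w)) ?r" using claim2 unfolding D2_def .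
  have Delta_Op: "Op M \<Delta> ?r"
    unfolding \<Delta>_def using Op_add[OF D1_Op dsGb] by (simp add: mult.commute)
  have E_Op: "Op M E ?r"
    unfolding E_def using Op_add[OF D2_Op dsGb] by (simp add: mult.commute)
  have Delta0: "\<Delta> n w \<ge> 0" for n w unfolding \<Delta>_def ds_def using m1_nonneg[of "D1 n w"] Gb(1)
    by (simp add: add_nonneg_nonneg)
  have E0: "E n w \<ge> 0" for n w unfolding E_def ds_def using Gb(1) by simp
  have NOp: "Op M (\<lambda>n w. norm (Nn n w)) ?r" by (rule N_Op)
  have T1: "Op M (\<lambda>n w. \<Theta> * \<Delta> n w) ?r" by (rule Op_cmult[OF Delta_Op r0 Th(2) Delta0])
  have T2: "Op M (\<lambda>n w. \<Delta> n w * norm (Nn n w)) ?r"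
    by (rule Op_mult[OF Op_sqrt_to_1[OF Delta_Op] NOp r0 Delta0]) simp
  have T2': "Op M (\<lambda>n w. (1 / c) * (\<Delta> n w * norm (Nn n w))) ?r"
    by (rule Op_cmult[OF T2 r0]) (use c Delta0 in \<open>auto intro: mult_nonneg_nonneg\<close>)
  have inner3: "Op M (\<lambda>n w. E n w + \<Delta> n w * \<Theta> + (1 / c) * (\<Delta> n w * norm (Nn n w))) ?r"
    using Op_add[OF Op_add[OF E_Op T1] T2'] by (simp add: mult.commute)
  have RHS3_Op: "Op M RHS3 ?r"
    unfolding RHS3_def
    by (rule Op_cmult[OF inner3 r0]) (use c E0 Delta0 Th(2) in \<open>auto intro!: add_nonneg_nonneg mult_nonneg_nonneg\<close>)
  have NcOp: "Op M (\<lambda>n w. (1 / c) * norm (Nn n w)) ?r" by (rule Op_cmult[OF NOp r0]) (use c in auto)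
  have RHS4_Op: "Op M RHS4 ?r" unfolding RHS4_def by (rule Op_add[OF RHS3_Op NcOp])
  define N where "N = max (max N0 N1) 1"
  have det: "norm (thetaBE fx fy R t p eps s2 n w - thetaUB fx fy R t p eps n w) \<le> RHS3 n w
           \<and> norm (thetaBE fx fy R t p eps s2 n w - theta_o R t p n) \<le> RHS4 n w"
    if n: "n \<ge> N" and small: "\<Delta> n w \<le> c / 2" for n w
  proof -
    have nN0: "n \<ge> N0" and nN1: "n \<ge> N1" and n1: "n \<ge> 1" using n unfolding N_def by auto
    have rn: "real n > 0" using n1 by simp
    have lowL: "norm (L n *v x) \<ge> c * norm x" for x using c(2) nN0 unfolding L_def by blast
    let ?xUB = "thetaUB fx fy R t p eps n w"
    let ?xBE = "thetaBE fx fy R t p eps s2 n w"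
    let ?th = "theta_o R t p n"
    define X where "X = (1 / real n) *\<^sub>R (AtA fx fy R t p eps n w - s2 n w *\<^sub>R GtG p n)"
    define Y where "Y = (1 / real n) *\<^sub>R (Atb fx fy R t p eps n w - s2 n w *\<^sub>R Gt1 p n)"
    define Z where "Z = (1 / real n) *\<^sub>R Btb fx fy R t p eps n w"
    have BtBeq: "BtB fx fy R t p n = real n *\<^sub>R L n" unfolding L_def using rn by simp
    have LxUB: "L n *v ?xUB = Z"
      unfolding thetaUB_def BtBeq Z_def by (rule scale_solve[OF c(1) rn lowL])
    have LN: "Z - L n *v ?th = Nn n w" unfolding Z_def L_def using N_eq[of n w] n1 by simp
    have "L n *v (?xUB - ?th) = Nn n w" using LxUB LN by (simp add: matrix_vector_mult_diff_distrib)
    then have xUBth: "norm (?xUB - ?th) \<le> norm (Nn n w) / c" by (rule solve_bound[OF c(1) lowL])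
    have xUBn: "norm ?xUB \<le> \<Theta> + norm (Nn n w) / c"
      using xUBth Th(1) nN1 norm_triangle_sub[of ?xUB ?th] by (smt (verit) norm_minus_commute)
    have XL: "X - L n = D1 n w + (\<sigma>\<^sup>2 - s2 n w) *\<^sub>R ((1 / real n) *\<^sub>R GtG p n)"
      unfolding X_def L_def D1_def by (simp add: algebra_simps)
    have YZ: "Y - Z = D2 n w + (\<sigma>\<^sup>2 - s2 n w) *\<^sub>R ((1 / real n) *\<^sub>R Gt1 p n)"
      unfolding Y_def Z_def D2_def by (simp add: algebra_simps)
    have m1XL: "m1 (X - L n) \<le> \<Delta> n w"
    proof -
      have "m1 (X - L n) \<le> m1 (D1 n w) + m1 ((\<sigma>\<^sup>2 - s2 n w) *\<^sub>R ((1 / real n) *\<^sub>R GtG p n))"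
        unfolding XL by (rule m1_add)
      also have "\<dots> \<le> m1 (D1 n w) + ds n w * Gb"
      proof -
        have "m1 ((\<sigma>\<^sup>2 - s2 n w) *\<^sub>R ((1 / real n) *\<^sub>R GtG p n)) = \<bar>\<sigma>\<^sup>2 - s2 n w\<bar> * m1 ((1 / real n) *\<^sub>R GtG p n)"
          by (rule m1_scale)
        also have "\<dots> \<le> ds n w * Gb" unfolding ds_def using Gb(2)
          by (simp add: abs_minus_commute mult_left_mono)
        finally show ?thesis by simp
      qed
      finally show ?thesis unfolding \<Delta>_def .
    qed
    have nYZ: "norm (Y - Z) \<le> E n w"
    proof -
      have "norm (Y - Z) \<le> norm (D2 n w) + norm ((\<sigma>\<^sup>2 - s2 n w) *\<^sub>R ((1 / real n) *\<^sub>R Gt1 p n))"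
        unfolding YZ by (rule norm_triangle_ineq)
      also have "\<dots> \<le> norm (D2 n w) + ds n w * Gb"
      proof -
        have "norm ((\<sigma>\<^sup>2 - s2 n w) *\<^sub>R ((1 / real n) *\<^sub>R Gt1 p n)) = \<bar>\<sigma>\<^sup>2 - s2 n w\<bar> * norm ((1 / real n) *\<^sub>R Gt1 p n)"
          by (rule norm_scaleR)
        also have "\<dots> \<le> ds n w * Gb" unfolding ds_def using Gb(2)
          by (intro mult_mono) (auto simp: abs_minus_commute)
        finally show ?thesis by simp
      qed
      finally show ?thesis unfolding E_def .
    qed
    have lowX: "norm (X *v x) \<ge> (c / 2) * norm x" for x
      by (rule perturb_lower[OF lowL]) (use m1XL small in linarith)
    have c2: "c / 2 > 0" using c(1) by simp
    have AmEq: "AtA fx fy R t p eps n w - s2 n w *\<^sub>R GtG p n = real n *\<^sub>R X" unfolding X_def using rn by simp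
    have XxBE: "X *v ?xBE = Y"
      unfolding thetaBE_def AmEq Y_def by (rule scale_solve[OF c2 rn lowX])
    have "X *v (?xBE - ?xUB) = (Y - Z) - (X - L n) *v ?xUB"
      using XxBE LxUB by (simp add: matrix_vector_mult_diff_distrib matrix_vector_mult_diff_rdistrib)
    then have "norm (?xBE - ?xUB) \<le> norm ((Y - Z) - (X - L n) *v ?xUB) / (c / 2)"
      by (rule solve_bound[OF c2 lowX])
    also have "\<dots> \<le> (E n w + \<Delta> n w * (\<Theta> + norm (Nn n w) / c)) / (c / 2)"
    proof (rule divide_right_mono)
      have "norm ((X - L n) *v ?xUB) \<le> m1 (X - L n) * norm ?xUB" by (rule matvec_le)
      also have "\<dots> \<le> \<Delta> n w * (\<Theta> + norm (Nn n w) / c)"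
        using m1XL xUBn by (intro mult_mono) (auto simp: m1_nonneg Delta0)
      finally have "norm ((X - L n) *v ?xUB) \<le> \<Delta> n w * (\<Theta> + norm (Nn n w) / c)" .
      then show "norm ((Y - Z) - (X - L n) *v ?xUB) \<le> E n w + \<Delta> n w * (\<Theta> + norm (Nn n w) / c)"
        using nYZ norm_triangle_ineq4[of "Y - Z" "(X - L n) *v ?xUB"] by linarith
    qed (use c2 in simp)
    also have "\<dots> = RHS3 n w" unfolding RHS3_def using c(1) by (simp add: field_simps)
    finally have b3: "norm (?xBE - ?xUB) \<le> RHS3 n w" .
    have "norm (?xBE - ?th) \<le> norm (?xBE - ?xUB) + norm (?xUB - ?th)"
      by (rule norm_diff_triangle_ineq[of ?xBE ?xUB ?xUB ?th, simplified])
    also have "\<dots> \<le> RHS4 n w" unfolding RHS4_def using b3 xUBth by simp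
    finally show ?thesis using b3 by simp
  qed
  have ev: "\<exists>N'. \<forall>n\<ge>N'. \<exists>S\<in>sets M. {w \<in> space M. F n w > G n w} \<subseteq> S \<and> measure M S < e"
    if e: "e > 0" and FG: "\<And>n w. n \<ge> N \<Longrightarrow> \<Delta> n w \<le> c / 2 \<Longrightarrow> F n w \<le> G n w" for F G :: "nat \<Rightarrow> 'w \<Rightarrow> real" and e :: real
  proof -
    obtain N2 where N2: "\<forall>n\<ge>N2. \<exists>S\<in>sets M. {w \<in> space M. \<Delta> n w > c / 2} \<subseteq> S \<and> measure M S < e"
      using Op_small[OF Delta_Op _ e, of "c / 2"] c(1) by (metis half_gt_zero)
    show ?thesis
    proof (intro exI allI impI)
      fix n assume n: "n \<ge> max N N2"
      then obtain S where S: "S \<in> sets M" "{w \<in> space M. \<Delta> n w > c / 2} \<subseteq> S" "measure M S < e"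
        using N2 by auto
      have "{w \<in> space M. F n w > G n w} \<subseteq> {w \<in> space M. \<Delta> n w > c / 2}"
      proof safe
        fix x assume x: "x \<in> space M" "F n x > G n x"
        show "\<Delta> n x > c / 2"
        proof (rule ccontr)
          assume "\<not> \<Delta> n x > c / 2"
          then have "F n x \<le> G n x" using FG[of n x] n by simp
          then show False using x by simp
        qed
      qed
      then show "\<exists>S\<in>sets M. {w \<in> space M. F n w > G n w} \<subseteq> S \<and> measure M S < e"
        using S by blast
    qed
  qed
  show ?thesis
  proof
    show "Op M (\<lambda>n w. norm (thetaBE fx fy R t p eps s2 n w - thetaUB fx fy R t p eps n w)) ?r"
      by (rule Op_ev[OF RHS3_Op]) (rule ev, assumption, use det in blast)
    show "Op M (\<lambda>n w. norm (thetaBE fx fy R t p eps s2 n w - theta_o R t p n)) ?r"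
      by (rule Op_ev[OF RHS4_Op]) (rule ev, assumption, use det in blast)
  qed
qed

end

theorem mainTheorem3:
  fixes M :: "'w measure"
    and fx fy :: real and R :: "real^3^3" and t :: "real^3"
    and p :: "nat \<Rightarrow> real^3"
    and \<sigma> :: real
    and eps :: "nat \<Rightarrow> nat \<Rightarrow> 'w \<Rightarrow> real"
    and s2 :: "nat \<Rightarrow> 'w \<Rightarrow> real"
  assumes P: "prob_space M"
    and f: "fx > 0" "fy > 0"
    and rot: "orthogonal_matrix R" "det R = 1"
    and front: "\<And>i. depth R t (p i) > 0"
    and sig: "\<sigma> \<ge> 0"
    and noise_rv: "\<And>i j. eps i j \<in> borel_measurable M"
    and noise_indep: "prob_space.indep_vars M (\<lambda>_. borel) (\<lambda>(i, j). eps i j) (UNIV \<times> {0, 1})"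
    and noise_gauss: "\<sigma> > 0 \<Longrightarrow> \<forall>i j. distributed M lborel (eps i j) (normal_density 0 \<sigma>)"
    and noise_zero: "\<sigma> = 0 \<Longrightarrow> \<forall>i j. AE w in M. eps i j w = 0"
    and bounded_pts: "bounded (range p)"
    and emp_conv: "\<And>g :: real^3 \<Rightarrow> real. continuous_on UNIV g \<Longrightarrow> bounded (range g) \<Longrightarrow>
                     convergent (\<lambda>n. (\<Sum>i<n. g (p i)) / real n)"
    and BtB_conv: "\<exists>L. ((\<lambda>n. (1 / real n) *\<^sub>R BtB fx fy R t p n) \<longlonglongrightarrow> L) \<and> invertible L"
    and s2_rate: "Op M (\<lambda>n w. sqrt (real n) * \<bar>s2 n w - \<sigma>\<^sup>2\<bar>) (\<lambda>_. 1)"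
  shows "Op M (\<lambda>n w. norm ((1 / real n) *\<^sub>R AtA fx fy R t p eps n w - (1 / real n) *\<^sub>R BtB fx fy R t p n
                             - \<sigma>\<^sup>2 *\<^sub>R ((1 / real n) *\<^sub>R GtG p n))) (\<lambda>n. 1 / sqrt (real n))
       \<and> Op M (\<lambda>n w. norm ((1 / real n) *\<^sub>R Atb fx fy R t p eps n w - (1 / real n) *\<^sub>R Btb fx fy R t p eps n w
                             - \<sigma>\<^sup>2 *\<^sub>R ((1 / real n) *\<^sub>R Gt1 p n))) (\<lambda>n. 1 / sqrt (real n))
       \<and> Op M (\<lambda>n w. norm (thetaBE fx fy R t p eps s2 n w - thetaUB fx fy R t p eps n w)) (\<lambda>n. 1 / sqrt (real n))
       \<and> Op M (\<lambda>n w. norm (thetaBE fx fy R t p eps s2 n w - theta_o R t p n)) (\<lambda>n. 1 / sqrt (real n))"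
proof -
  interpret cam M fx fy R t p \<sigma> eps s2
    by (rule cam.intro[OF P f rot front sig noise_rv noise_indep noise_gauss noise_zero bounded_pts BtB_conv s2_rate])
  show ?thesis by (intro conjI claim1 claim2 claims34[THEN conjunct1] claims34[THEN conjunct2])
qed

end
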